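(* Let $\mathcal C$ be a cocomplete category and $I$ a class of morphisms in $\mathcal C$. Then $\Phi(I)\text{-cof}_{\mathrm{reg}}\subseteq \Phi(I\text{-cof}_{\mathrm{reg}})$.
   Context: For a class $I$ of morphisms, $I\text{-cof}_{\mathrm{reg}}$ is the class of all transfinite compositions of base changes (pushouts) of morphisms from $I$. For a class $I$ of morphisms, $\Phi(I)$ is the class of all morphisms $f:A\to B$ in $\mathcal C$ for which there exists a morphism $h:B\to C$ such that $h\in I$ and $h\circ f\in I$. *)

theory Defs
  imports Main
begin

record ('o, 'm) cat =
  obj :: "'o set"
  arr :: "'m set"
  cdom :: "'m \<Rightarrow> 'o"
  ccod :: "'m \<Rightarrow> 'o"
  idt :: "'o \<Rightarrow> 'm"
  cmp :: "'m \<Rightarrow> 'm \<Rightarrow> 'm"   (* cmp C g f = g \<circ> f, defined when ccod f = cdom g *)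

definition hom :: "('o, 'm) cat \<Rightarrow> 'o \<Rightarrow> 'o \<Rightarrow> 'm set" where
  "hom C a b = {f \<in> arr C. cdom C f = a \<and> ccod C f = b}"

definition category :: "('o, 'm) cat \<Rightarrow> bool" where
  "category C \<longleftrightarrow>
     (\<forall>f \<in> arr C. cdom C f \<in> obj C \<and> ccod C f \<in> obj C) \<and>
     (\<forall>a \<in> obj C. idt C a \<in> hom C a a) \<and>
     (\<forall>f \<in> arr C. \<forall>g \<in> arr C. ccod C f = cdom C g \<longrightarrow>
          cmp C g f \<in> hom C (cdom C f) (ccod C g)) \<and>
     (\<forall>f \<in> arr C. \<forall>g \<in> arr C. \<forall>h \<in> arr C. ccod C f = cdom C g \<longrightarrow> ccod C g = cdom C h \<longrightarrow>
          cmp C h (cmp C g f) = cmp C (cmp C h g) f) \<and>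
     (\<forall>f \<in> arr C. cmp C f (idt C (cdom C f)) = f \<and> cmp C (idt C (ccod C f)) f = f)"

definition diagram :: "('x, 'y) cat \<Rightarrow> ('o, 'm) cat \<Rightarrow> ('x \<Rightarrow> 'o) \<Rightarrow> ('y \<Rightarrow> 'm) \<Rightarrow> bool" where
  "diagram J C Do Da \<longleftrightarrow>
     (\<forall>j \<in> obj J. Do j \<in> obj C) \<and>
     (\<forall>u \<in> arr J. Da u \<in> hom C (Do (cdom J u)) (Do (ccod J u))) \<and>
     (\<forall>j \<in> obj J. Da (idt J j) = idt C (Do j)) \<and>
     (\<forall>u \<in> arr J. \<forall>v \<in> arr J. ccod J u = cdom J v \<longrightarrow> Da (cmp J v u) = cmp C (Da v) (Da u))"

definition cocone :: "('x, 'y) cat \<Rightarrow> ('o, 'm) cat \<Rightarrow> ('x \<Rightarrow> 'o) \<Rightarrow> ('y \<Rightarrow> 'm)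
    \<Rightarrow> 'o \<Rightarrow> ('x \<Rightarrow> 'm) \<Rightarrow> bool" where
  "cocone J C Do Da L lam \<longleftrightarrow>
     L \<in> obj C \<and>
     (\<forall>j \<in> obj J. lam j \<in> hom C (Do j) L) \<and>
     (\<forall>u \<in> arr J. cmp C (lam (ccod J u)) (Da u) = lam (cdom J u))"

definition is_colimit :: "('x, 'y) cat \<Rightarrow> ('o, 'm) cat \<Rightarrow> ('x \<Rightarrow> 'o) \<Rightarrow> ('y \<Rightarrow> 'm)
    \<Rightarrow> 'o \<Rightarrow> ('x \<Rightarrow> 'm) \<Rightarrow> bool" where
  "is_colimit J C Do Da L lam \<longleftrightarrow>
     cocone J C Do Da L lam \<and>
     (\<forall>Q mu. cocone J C Do Da Q mu \<longrightarrow>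
        (\<exists>!w. w \<in> hom C L Q \<and> (\<forall>j \<in> obj J. cmp C w (lam j) = mu j)))"

text \<open>C is cocomplete w.r.t. the universe of (small) index categories whose objects and arrows
  live in the type 'x: every such diagram has a colimit.\<close>
definition cocomplete :: "'x itself \<Rightarrow> ('o, 'm) cat \<Rightarrow> bool" where
  "cocomplete _ C \<longleftrightarrow>
     (\<forall>(J :: ('x, 'x) cat) Do Da. category J \<and> diagram J C Do Da \<longrightarrow>
        (\<exists>L lam. is_colimit J C Do Da L lam))"

text \<open>Square  A --f--> B,  A --g--> X,  X --f'--> P,  B --g'--> P  is a pushout;
  f' is then the base change (pushout) of f along g.\<close>
definition is_pushout :: "('o, 'm) cat \<Rightarrow> 'm \<Rightarrow> 'm \<Rightarrow> 'm \<Rightarrow> 'm \<Rightarrow> bool" where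
  "is_pushout C f g f' g' \<longleftrightarrow>
     f \<in> arr C \<and> g \<in> arr C \<and> cdom C f = cdom C g \<and>
     f' \<in> hom C (ccod C g) (ccod C f') \<and> g' \<in> hom C (ccod C f) (ccod C f') \<and>
     cmp C f' g = cmp C g' f \<and>
     (\<forall>u v. u \<in> arr C \<and> v \<in> arr C \<and> cdom C u = ccod C g \<and> cdom C v = ccod C f \<and>
            ccod C u = ccod C v \<and> cmp C u g = cmp C v f \<longrightarrow>
        (\<exists>!w. w \<in> hom C (ccod C f') (ccod C u) \<and> cmp C w f' = u \<and> cmp C w g' = v))"

definition base_changes :: "('o, 'm) cat \<Rightarrow> 'm set \<Rightarrow> 'm set" where
  "base_changes C K = {f'. \<exists>f g g'. f \<in> K \<and> is_pushout C f g f' g'}"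

text \<open>Ordinals are represented by well-orders r (on the index type 'i); (b, c) \<in> r means b \<le> c.
  A sequence is given by objects X b and transition maps T b c : X b \<rightarrow> X c for b \<le> c.\<close>

definition chain_colimit :: "('o, 'm) cat \<Rightarrow> 'i rel \<Rightarrow> 'i set \<Rightarrow> ('i \<Rightarrow> 'o)
    \<Rightarrow> ('i \<Rightarrow> 'i \<Rightarrow> 'm) \<Rightarrow> 'o \<Rightarrow> ('i \<Rightarrow> 'm) \<Rightarrow> bool" where
  "chain_colimit C r S X T L lam \<longleftrightarrow>
     L \<in> obj C \<and>
     (\<forall>b \<in> S. lam b \<in> hom C (X b) L) \<and>
     (\<forall>b \<in> S. \<forall>c \<in> S. (b, c) \<in> r \<longrightarrow> cmp C (lam c) (T b c) = lam b) \<and>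
     (\<forall>Q mu. Q \<in> obj C \<and> (\<forall>b \<in> S. mu b \<in> hom C (X b) Q) \<and>
             (\<forall>b \<in> S. \<forall>c \<in> S. (b, c) \<in> r \<longrightarrow> cmp C (mu c) (T b c) = mu b) \<longrightarrow>
        (\<exists>!w. w \<in> hom C L Q \<and> (\<forall>b \<in> S. cmp C w (lam b) = mu b)))"

definition immediate_succ :: "'i rel \<Rightarrow> 'i \<Rightarrow> 'i \<Rightarrow> bool" where
  "immediate_succ r b c \<longleftrightarrow>
     (b, c) \<in> r \<and> b \<noteq> c \<and> (\<forall>d. (b, d) \<in> r \<and> (d, c) \<in> r \<longrightarrow> d = b \<or> d = c)"

definition limit_point :: "'i rel \<Rightarrow> 'i \<Rightarrow> bool" where
  "limit_point r c \<longleftrightarrow> c \<in> Field r \<and> (\<exists>b. (b, c) \<in> r \<and> b \<noteq> c) \<and> \<not> (\<exists>b. immediate_succ r b c)"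

definition tseq :: "('o, 'm) cat \<Rightarrow> 'm set \<Rightarrow> 'i rel \<Rightarrow> ('i \<Rightarrow> 'o) \<Rightarrow> ('i \<Rightarrow> 'i \<Rightarrow> 'm) \<Rightarrow> bool" where
  "tseq C K r X T \<longleftrightarrow>
     (\<forall>b \<in> Field r. X b \<in> obj C) \<and>
     (\<forall>b c. (b, c) \<in> r \<longrightarrow> T b c \<in> hom C (X b) (X c)) \<and>
     (\<forall>b \<in> Field r. T b b = idt C (X b)) \<and>
     (\<forall>b c d. (b, c) \<in> r \<and> (c, d) \<in> r \<longrightarrow> cmp C (T c d) (T b c) = T b d) \<and>
     (\<forall>b c. immediate_succ r b c \<longrightarrow> T b c \<in> K) \<and>
     (\<forall>c. limit_point r c \<longrightarrow> chain_colimit C r (underS r c) X T (X c) (\<lambda>b. T b c))"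

definition tcomp :: "'i itself \<Rightarrow> ('o, 'm) cat \<Rightarrow> 'm set \<Rightarrow> 'm set" where
  "tcomp _ C K = {h. \<exists>(r :: 'i rel) X T L lam b0.
       Well_order r \<and> b0 \<in> Field r \<and> (\<forall>b \<in> Field r. (b0, b) \<in> r) \<and>
       tseq C K r X T \<and> chain_colimit C r (Field r) X T L lam \<and> h = lam b0}"

definition cof_reg :: "'i itself \<Rightarrow> ('o, 'm) cat \<Rightarrow> 'm set \<Rightarrow> 'm set" where
  "cof_reg ty C I = tcomp ty C (base_changes C I)"

definition Phi :: "('o, 'm) cat \<Rightarrow> 'm set \<Rightarrow> 'm set" where
  "Phi C I = {f \<in> arr C. \<exists>h. h \<in> I \<and> h \<in> arr C \<and> cdom C h = ccod C f \<and> cmp C h f \<in> I}"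

end

theory Submission
  imports Defs
begin

unbundle cardinal_syntax
lemma inj_pair_x:
  assumes "infinite (UNIV :: 'x set)" and "inj (e :: 'i \<Rightarrow> 'x)"
  shows "\<exists>e2 :: 'i \<times> 'i \<Rightarrow> 'x. inj e2"
proof -
  have "|UNIV :: ('i \<times> 'i) set| \<le>o |UNIV :: 'x set|"
  proof (cases "finite (UNIV :: 'i set)")
    case True
    hence "finite (UNIV :: ('i \<times> 'i) set)" by (metis UNIV_Times_UNIV finite_cartesian_product)
    thus ?thesis using assms(1) finite_ordLess_infinite[OF card_of_Well_order card_of_Well_order] Field_card_of ordLess_imp_ordLeq by metis
  next
    case False
    have 1: "|UNIV \<times> UNIV :: ('i \<times> 'i) set| =o |UNIV :: 'i set|"
      using card_of_Times_same_infinite[OF False] .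
    have 2: "|UNIV :: 'i set| \<le>o |UNIV :: 'x set|"
      using assms(2) card_of_ordLeq by blast
    show ?thesis using ordIso_ordLeq_trans[OF 1 2] by simp
  qed
  thus ?thesis using card_of_ordLeq[of "UNIV :: ('i \<times> 'i) set" "UNIV :: 'x set"] by blast
qed

locale catC =
  fixes C :: "('o, 'm) cat"
  assumes cat: "category C"
begin

lemma dom_obj: "f \<in> arr C \<Longrightarrow> cdom C f \<in> obj C"
  using cat unfolding category_def by blast
lemma cod_obj: "f \<in> arr C \<Longrightarrow> ccod C f \<in> obj C"
  using cat unfolding category_def by blast
lemma id_arr[simp]: "a \<in> obj C \<Longrightarrow> idt C a \<in> arr C"
  using cat unfolding category_def hom_def by blast
lemma id_dom[simp]: "a \<in> obj C \<Longrightarrow> cdom C (idt C a) = a"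
  using cat unfolding category_def hom_def by blast
lemma id_cod[simp]: "a \<in> obj C \<Longrightarrow> ccod C (idt C a) = a"
  using cat unfolding category_def hom_def by blast
lemma comp_arr[simp]: "f \<in> arr C \<Longrightarrow> g \<in> arr C \<Longrightarrow> ccod C f = cdom C g \<Longrightarrow> cmp C g f \<in> arr C"
  using cat unfolding category_def hom_def by blast
lemma comp_dom[simp]: "f \<in> arr C \<Longrightarrow> g \<in> arr C \<Longrightarrow> ccod C f = cdom C g \<Longrightarrow> cdom C (cmp C g f) = cdom C f"
  using cat unfolding category_def hom_def by blast
lemma comp_cod[simp]: "f \<in> arr C \<Longrightarrow> g \<in> arr C \<Longrightarrow> ccod C f = cdom C g \<Longrightarrow> ccod C (cmp C g f) = ccod C g"
  using cat unfolding category_def hom_def by blast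
lemma assoc: "f \<in> arr C \<Longrightarrow> g \<in> arr C \<Longrightarrow> h \<in> arr C \<Longrightarrow> ccod C f = cdom C g \<Longrightarrow> ccod C g = cdom C h \<Longrightarrow>
   cmp C h (cmp C g f) = cmp C (cmp C h g) f"
  using cat unfolding category_def by blast
lemma id_right[simp]: "f \<in> arr C \<Longrightarrow> cdom C f = a \<Longrightarrow> cmp C f (idt C a) = f"
  using cat unfolding category_def by blast
lemma id_left[simp]: "f \<in> arr C \<Longrightarrow> ccod C f = a \<Longrightarrow> cmp C (idt C a) f = f"
  using cat unfolding category_def by blast

lemma homI: "f \<in> arr C \<Longrightarrow> cdom C f = a \<Longrightarrow> ccod C f = b \<Longrightarrow> f \<in> hom C a b"
  unfolding hom_def by blast
lemma homD: "f \<in> hom C a b \<Longrightarrow> f \<in> arr C \<and> cdom C f = a \<and> ccod C f = b"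
  unfolding hom_def by blast

end

definition map_cat :: "('a \<Rightarrow> 'x) \<Rightarrow> ('a, 'a) cat \<Rightarrow> ('x, 'x) cat" where
  "map_cat e J = \<lparr>obj = e ` obj J, arr = e ` arr J,
      cdom = (\<lambda>x. e (cdom J (inv e x))), ccod = (\<lambda>x. e (ccod J (inv e x))),
      idt = (\<lambda>x. e (idt J (inv e x))), cmp = (\<lambda>y x. e (cmp J (inv e y) (inv e x)))\<rparr>"

lemma map_cat_simps:
  "obj (map_cat e J) = e ` obj J" "arr (map_cat e J) = e ` arr J"
  "cdom (map_cat e J) x = e (cdom J (inv e x))" "ccod (map_cat e J) x = e (ccod J (inv e x))"
  "idt (map_cat e J) x = e (idt J (inv e x))" "cmp (map_cat e J) y x = e (cmp J (inv e y) (inv e x))"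
  unfolding map_cat_def by simp_all

lemma ball_img: "(\<forall>x\<in>f ` A. P x) = (\<forall>y\<in>A. P (f y))" by auto

lemma map_cat_category:
  assumes "inj e" "category J" shows "category (map_cat e J)"
proof -
  note ie = inv_f_f[OF assms(1)] inj_eq[OF assms(1)]
  show ?thesis using assms(2) unfolding category_def hom_def map_cat_simps
    by (simp add: ie ball_img)
qed

lemma map_cat_diagram:
  assumes "inj e" "diagram J C Do Da"
  shows "diagram (map_cat e J) C (Do \<circ> inv e) (Da \<circ> inv e)"
proof -
  note ie = inv_f_f[OF assms(1)] inj_eq[OF assms(1)]
  show ?thesis using assms(2) unfolding diagram_def map_cat_simps
    by (simp add: ie ball_img)
qed

lemma map_cat_cocone:
  assumes "inj e"
  shows "cocone (map_cat e J) C (Do \<circ> inv e) (Da \<circ> inv e) L mu \<longleftrightarrow> cocone J C Do Da L (mu \<circ> e)"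
  unfolding cocone_def map_cat_simps by (simp add: inv_f_f[OF assms(1)] inj_eq[OF assms(1)])

lemma map_cat_colimit:
  assumes "inj e" "is_colimit (map_cat e J) C (Do \<circ> inv e) (Da \<circ> inv e) L lam"
  shows "is_colimit J C Do Da L (lam \<circ> e)"
proof -
  have c: "cocone J C Do Da L (lam \<circ> e)" using assms(2) unfolding is_colimit_def map_cat_cocone[OF assms(1)] by (rule conjunct1)
  have "\<exists>!w. w \<in> hom C L Q \<and> (\<forall>j\<in>obj J. cmp C w ((lam \<circ> e) j) = mu j)"
    if "cocone J C Do Da Q mu" for Q mu
  proof -
    have mu: "mu \<circ> inv e \<circ> e = mu" using inv_o_cancel[OF assms(1)] by (simp add: o_assoc[symmetric])
    have "cocone (map_cat e J) C (Do \<circ> inv e) (Da \<circ> inv e) Q (mu \<circ> inv e)"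
      using that map_cat_cocone[OF assms(1)] mu by metis
    then have "\<exists>!w. w \<in> hom C L Q \<and> (\<forall>j\<in>obj (map_cat e J). cmp C w (lam j) = (mu \<circ> inv e) j)"
      using assms(2) unfolding is_colimit_def by blast
    moreover have "(\<forall>j\<in>obj (map_cat e J). cmp C w (lam j) = (mu \<circ> inv e) j) \<longleftrightarrow>
        (\<forall>j\<in>obj J. cmp C w ((lam \<circ> e) j) = mu j)" for w
      unfolding map_cat_simps by (simp add: inv_f_f[OF assms(1)])
    ultimately show ?thesis by simp
  qed
  with c show ?thesis unfolding is_colimit_def by blast
qed

lemma cocomplete_colimit:
  assumes "cocomplete TYPE('x) C" "inj (e :: 'a \<Rightarrow> 'x)" "category (J :: ('a,'a) cat)" "diagram J C Do Da"
  shows "\<exists>L lam. is_colimit J C Do Da L lam"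
proof -
  have "\<exists>L lam. is_colimit (map_cat e J) C (Do \<circ> inv e) (Da \<circ> inv e) L lam"
    using assms(1) map_cat_category[OF assms(2,3)] map_cat_diagram[OF assms(2,4)]
    unfolding cocomplete_def by blast
  then obtain L lam where "is_colimit (map_cat e J) C (Do \<circ> inv e) (Da \<circ> inv e) L lam" by blast
  then show ?thesis using map_cat_colimit[OF assms(2), of J C Do Da L lam] by blast
qed

definition pJ :: "(nat, nat) cat" where
  "pJ = \<lparr>obj = {0,1,2}, arr = {0,1,2,3,4},
     cdom = (\<lambda>u. if u = 3 \<or> u = 4 then 0 else u),
     ccod = (\<lambda>u. if u = 3 then 1 else if u = 4 then 2 else u),
     idt = (\<lambda>u. u), cmp = (\<lambda>v u. if u \<le> 2 then v else u)\<rparr>"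

lemma pJ_cat: "category pJ"
  unfolding category_def hom_def pJ_def by simp

lemma pJ_simps: "obj pJ = {0,1,2}" "arr pJ = {0,1,2,3,4}"
  "cdom pJ u = (if u = 3 \<or> u = 4 then 0 else u)"
  "ccod pJ u = (if u = 3 then 1 else if u = 4 then 2 else u)"
  "idt pJ u = u" "cmp pJ v u = (if u \<le> 2 then v else u)"
  unfolding pJ_def by simp_all

context catC begin

lemma pushout_exists:
  assumes cc: "cocomplete TYPE('x) C" and inf: "infinite (UNIV :: 'x set)"
    and f: "f \<in> arr C" and g: "g \<in> arr C" and fg: "cdom C f = cdom C g"
  shows "\<exists>f' g'. is_pushout C f g f' g'"
proof -
  obtain e :: "nat \<Rightarrow> 'x" where e: "inj e"
    using inf infinite_countable_subset by blast
  define Do where "Do = (\<lambda>j::nat. if j = 0 then cdom C f else if j = 1 then ccod C f else ccod C g)"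
  define Da where "Da = (\<lambda>u::nat. if u = 3 then f else if u = 4 then g else idt C (Do u))"
  have objs: "cdom C f \<in> obj C" "ccod C f \<in> obj C" "ccod C g \<in> obj C"
    using f g dom_obj cod_obj by auto
  have dg: "diagram pJ C Do Da"
    unfolding diagram_def pJ_simps hom_def using objs f g fg
    by (simp add: Do_def Da_def)
  obtain L lam where col: "is_colimit pJ C Do Da L lam"
    using cocomplete_colimit[OF cc e pJ_cat dg] by blast
  have co: "cocone pJ C Do Da L lam" using col unfolding is_colimit_def by (rule conjunct1)
  have l0: "lam 0 \<in> hom C (cdom C f) L" and l1: "lam 1 \<in> hom C (ccod C f) L"
    and l2: "lam 2 \<in> hom C (ccod C g) L"
    using co unfolding cocone_def pJ_simps by (simp_all add: Do_def)
  have c3: "cmp C (lam 1) f = lam 0" and c4: "cmp C (lam 2) g = lam 0"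
    using co unfolding cocone_def pJ_simps by (simp_all add: Da_def)
  have l0': "lam 0 \<in> arr C" "cdom C (lam 0) = cdom C f" "ccod C (lam 0) = L"
    using l0 unfolding hom_def by simp_all
  have l1': "lam 1 \<in> arr C" "cdom C (lam 1) = ccod C f" "ccod C (lam 1) = L"
    using l1 unfolding hom_def by simp_all
  have l2': "lam 2 \<in> arr C" "cdom C (lam 2) = ccod C g" "ccod C (lam 2) = L"
    using l2 unfolding hom_def by simp_all
  have up: "\<exists>!w. w \<in> hom C (ccod C (lam 2)) (ccod C u) \<and> cmp C w (lam 2) = u \<and> cmp C w (lam 1) = v"
    if uv: "u \<in> arr C" "v \<in> arr C" "cdom C u = ccod C g" "cdom C v = ccod C f"
      "ccod C u = ccod C v" "cmp C u g = cmp C v f" for u v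
  proof -
    define mu where "mu = (\<lambda>j::nat. if j = 0 then cmp C u g else if j = 1 then v else u)"
    have "cod": "ccod C u \<in> obj C" using uv(1) cod_obj by blast
    have "cocone pJ C Do Da (ccod C u) mu"
      unfolding cocone_def pJ_simps hom_def using uv f g fg objs "cod"
      by (simp add: mu_def Do_def Da_def)
    then have ex: "\<exists>!w. w \<in> hom C L (ccod C u) \<and> (\<forall>j\<in>obj pJ. cmp C w (lam j) = mu j)"
      using col unfolding is_colimit_def by blast
    have eq: "(\<forall>j\<in>obj pJ. cmp C w (lam j) = mu j) \<longleftrightarrow> cmp C w (lam 2) = u \<and> cmp C w (lam 1) = v"
      if w: "w \<in> hom C L (ccod C u)" for w
    proof -
      have w': "w \<in> arr C" "cdom C w = L" using w unfolding hom_def by simp_all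
      have "cmp C w (lam 0) = cmp C (cmp C w (lam 2)) g"
        using c4[symmetric] assoc[of g "lam 2" w] g l2' w' by simp
      then show ?thesis unfolding pJ_simps mu_def by auto
    qed
    have "ccod C (lam 2) = L" using l2' by simp
    with ex eq show ?thesis by metis
  qed
  have "is_pushout C f g (lam 2) (lam 1)"
    unfolding is_pushout_def
  proof (intro conjI)
    show "lam 2 \<in> hom C (ccod C g) (ccod C (lam 2))" using l2 l2' by simp
    show "lam 1 \<in> hom C (ccod C f) (ccod C (lam 2))" using l1 l2' by simp
    show "cmp C (lam 2) g = cmp C (lam 1) f" using c3 c4 by simp
  qed (use f g fg up in auto)
  then show ?thesis by blast
qed


lemma hom_iff: "f \<in> hom C a b \<longleftrightarrow> f \<in> arr C \<and> cdom C f = a \<and> ccod C f = b"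
  unfolding hom_def by simp

lemma assoc_r: "f \<in> arr C \<Longrightarrow> g \<in> arr C \<Longrightarrow> h \<in> arr C \<Longrightarrow> ccod C f = cdom C g \<Longrightarrow> ccod C g = cdom C h \<Longrightarrow>
   cmp C (cmp C h g) f = cmp C h (cmp C g f)"
  using assoc by simp

lemma pushoutD:
  assumes po: "is_pushout C f g f' g'"
  shows "f \<in> arr C" "g \<in> arr C" "cdom C f = cdom C g" "f' \<in> arr C" "g' \<in> arr C"
    "cdom C f' = ccod C g" "cdom C g' = ccod C f" "ccod C g' = ccod C f'" "cmp C f' g = cmp C g' f"
  using po unfolding is_pushout_def hom_def by auto

lemma pushout_UP:
  assumes po: "is_pushout C f g f' g'"
    and uv: "u \<in> arr C" "v \<in> arr C" "cdom C u = ccod C g" "cdom C v = ccod C f"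
      "ccod C u = ccod C v" "cmp C u g = cmp C v f"
  obtains w where "w \<in> arr C" "cdom C w = ccod C f'" "ccod C w = ccod C u"
    "cmp C w f' = u" "cmp C w g' = v"
proof -
  have "\<exists>!w. w \<in> hom C (ccod C f') (ccod C u) \<and> cmp C w f' = u \<and> cmp C w g' = v"
    using po uv unfolding is_pushout_def by blast
  then show ?thesis using that unfolding hom_def by blast
qed

lemma pushout_uniq:
  assumes po: "is_pushout C f g f' g'"
    and w1: "w1 \<in> arr C" "cdom C w1 = ccod C f'" and w2: "w2 \<in> arr C" "cdom C w2 = ccod C f'"
    and cod: "ccod C w1 = ccod C w2"
    and e1: "cmp C w1 f' = cmp C w2 f'" and e2: "cmp C w1 g' = cmp C w2 g'"
  shows "w1 = w2"
proof -
  note D = pushoutD[OF po]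
  let ?u = "cmp C w1 f'" and ?v = "cmp C w1 g'"
  have a: "?u \<in> arr C" "?v \<in> arr C" "cdom C ?u = ccod C g" "cdom C ?v = ccod C f"
     "ccod C ?u = ccod C ?v"
    using D w1 by simp_all
  have b: "cmp C ?u g = cmp C ?v f"
    using D w1 by (simp add: assoc_r)
  have "\<exists>!w. w \<in> hom C (ccod C f') (ccod C ?u) \<and> cmp C w f' = ?u \<and> cmp C w g' = ?v"
    using po a b unfolding is_pushout_def by blast
  moreover have "w1 \<in> hom C (ccod C f') (ccod C ?u)" "w2 \<in> hom C (ccod C f') (ccod C ?u)"
    using w1 w2 cod D unfolding hom_iff by simp_all
  ultimately show ?thesis using e1 e2 by metis
qed

lemma pushout_id:
  assumes g: "g \<in> arr C"
  shows "is_pushout C (idt C (cdom C g)) g (idt C (ccod C g)) g"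
proof -
  have o: "cdom C g \<in> obj C" "ccod C g \<in> obj C" using g dom_obj cod_obj by auto
  show ?thesis unfolding is_pushout_def hom_iff
  proof (intro conjI allI impI)
    fix u v assume uv: "u \<in> arr C \<and> v \<in> arr C \<and> cdom C u = ccod C g \<and> cdom C v = ccod C (idt C (cdom C g)) \<and>
       ccod C u = ccod C v \<and> cmp C u g = cmp C v (idt C (cdom C g))"
    show "\<exists>!w. (w \<in> arr C \<and> cdom C w = ccod C (idt C (ccod C g)) \<and> ccod C w = ccod C u) \<and>
             cmp C w (idt C (ccod C g)) = u \<and> cmp C w g = v"
      apply (rule ex1I[of _ u]) using uv o by auto
  qed (use g o in simp_all)
qed


end

definition cJ :: "'i rel \<Rightarrow> 'i set \<Rightarrow> ('i \<times> 'i, 'i \<times> 'i) cat" where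
  "cJ r S = \<lparr>obj = {(b,b)| b. b \<in> S}, arr = {(b,c)| b c. (b,c) \<in> r \<and> b \<in> S \<and> c \<in> S},
     cdom = (\<lambda>(b,c). (b,b)), ccod = (\<lambda>(b,c). (c,c)), idt = (\<lambda>u. u),
     cmp = (\<lambda>(c',d) (b,c). (b,d))\<rparr>"

lemma cJ_simps: "obj (cJ r S) = {(b,b)| b. b \<in> S}"
  "arr (cJ r S) = {(b,c)| b c. (b,c) \<in> r \<and> b \<in> S \<and> c \<in> S}"
  "cdom (cJ r S) (b,c) = (b,b)" "ccod (cJ r S) (b,c) = (c,c)" "idt (cJ r S) u = u"
  "cmp (cJ r S) (c',d) (b,c) = (b,d)"
  unfolding cJ_def by simp_all

lemma cJ_cat:
  assumes "\<forall>b\<in>S. (b,b) \<in> r" "trans r"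
  shows "category (cJ r S)"
  using assms unfolding category_def hom_def cJ_simps trans_def by (auto simp: cJ_simps)

context catC begin

lemma chain_colimit_exists:
  assumes cc: "cocomplete TYPE('x) C" and e: "inj (e :: 'i \<times> 'i \<Rightarrow> 'x)"
    and rf: "\<forall>b\<in>S. (b,b) \<in> r" and tr: "trans r"
    and X: "\<forall>b\<in>S. (X :: 'i \<Rightarrow> 'o) b \<in> obj C"
    and T: "\<forall>b\<in>S. \<forall>c\<in>S. (b,c) \<in> r \<longrightarrow> T b c \<in> hom C (X b) (X c)"
    and Tid: "\<forall>b\<in>S. T b b = idt C (X b)"
    and Tc: "\<forall>b\<in>S. \<forall>c\<in>S. \<forall>d\<in>S. (b,c) \<in> r \<and> (c,d) \<in> r \<longrightarrow> cmp C (T c d) (T b c) = T b d"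
  shows "\<exists>L lam. chain_colimit C r S X T L lam"
proof -
  define Do where "Do = (\<lambda>p::'i\<times>'i. X (fst p))"
  define Da where "Da = (\<lambda>p::'i\<times>'i. T (fst p) (snd p))"
  have dg: "diagram (cJ r S) C Do Da"
    unfolding diagram_def cJ_simps using X T Tid Tc
    by (auto simp: Do_def Da_def cJ_simps)
  obtain L lam where col: "is_colimit (cJ r S) C Do Da L lam"
    using cocomplete_colimit[OF cc e cJ_cat[OF rf tr] dg] by blast
  have co: "cocone (cJ r S) C Do Da L lam" using col unfolding is_colimit_def by (rule conjunct1)
  have L: "L \<in> obj C" using co unfolding cocone_def by simp
  have lh: "\<forall>b\<in>S. lam (b,b) \<in> hom C (X b) L"
    using co unfolding cocone_def cJ_simps by (auto simp: Do_def)
  have lc: "\<forall>b\<in>S. \<forall>c\<in>S. (b,c) \<in> r \<longrightarrow> cmp C (lam (c,c)) (T b c) = lam (b,b)"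
    using co unfolding cocone_def cJ_simps by (auto simp: Da_def cJ_simps)
  have up: "\<exists>!w. w \<in> hom C L Q \<and> (\<forall>b\<in>S. cmp C w (lam (b,b)) = mu b)"
    if Q: "Q \<in> obj C" "\<forall>b\<in>S. mu b \<in> hom C (X b) Q"
      "\<forall>b\<in>S. \<forall>c\<in>S. (b,c) \<in> r \<longrightarrow> cmp C (mu c) (T b c) = mu b" for Q mu
  proof -
    have "cocone (cJ r S) C Do Da Q (\<lambda>(b,c). mu b)"
      unfolding cocone_def cJ_simps using Q by (auto simp: Do_def Da_def cJ_simps)
    then have ex: "\<exists>!w. w \<in> hom C L Q \<and> (\<forall>j\<in>obj (cJ r S). cmp C w (lam j) = (\<lambda>(b,c). mu b) j)"
      using col unfolding is_colimit_def by blast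
    have "(\<forall>j\<in>obj (cJ r S). cmp C w (lam j) = (\<lambda>(b,c). mu b) j) \<longleftrightarrow> (\<forall>b\<in>S. cmp C w (lam (b,b)) = mu b)" for w
      unfolding cJ_simps by auto
    with ex show ?thesis by simp
  qed
  have "chain_colimit C r S X T L (\<lambda>b. lam (b,b))"
    unfolding chain_colimit_def using L lh lc up by blast
  then show ?thesis by blast
qed

end

lemma chain_colimit_cong:
  assumes "\<forall>a\<in>S. X a = X' a" "\<forall>a\<in>S. \<forall>a'\<in>S. T a a' = T' a a'"
  shows "chain_colimit C r S X T L lam = chain_colimit C r S X' T' L lam"
  unfolding chain_colimit_def using assms by (simp cong: ball_cong)

context catC begin

lemma chain_UP:
  assumes cl: "chain_colimit C r S X T L lam"
    and Q: "Q \<in> obj C" "\<forall>b\<in>S. mu b \<in> hom C (X b) Q"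
      "\<forall>b\<in>S. \<forall>c\<in>S. (b, c) \<in> r \<longrightarrow> cmp C (mu c) (T b c) = mu b"
  obtains w where "w \<in> arr C" "cdom C w = L" "ccod C w = Q" "\<forall>b\<in>S. cmp C w (lam b) = mu b"
proof -
  have "\<exists>!w. w \<in> hom C L Q \<and> (\<forall>b\<in>S. cmp C w (lam b) = mu b)"
    using cl Q unfolding chain_colimit_def by blast
  then show ?thesis using that unfolding hom_iff by blast
qed

lemma chainD:
  assumes cl: "chain_colimit C r S X T L lam"
  shows "L \<in> obj C" "\<And>b. b \<in> S \<Longrightarrow> lam b \<in> arr C" "\<And>b. b \<in> S \<Longrightarrow> cdom C (lam b) = X b"
    "\<And>b. b \<in> S \<Longrightarrow> ccod C (lam b) = L"
    "\<And>b c. b \<in> S \<Longrightarrow> c \<in> S \<Longrightarrow> (b, c) \<in> r \<Longrightarrow> cmp C (lam c) (T b c) = lam b"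
  using cl unfolding chain_colimit_def hom_iff by auto

lemma chain_uniq:
  assumes cl: "chain_colimit C r S X T L lam"
    and Th: "\<forall>b\<in>S. \<forall>c\<in>S. (b, c) \<in> r \<longrightarrow> T b c \<in> arr C \<and> ccod C (T b c) = X c"
    and w1: "w1 \<in> arr C" "cdom C w1 = L" and w2: "w2 \<in> arr C" "cdom C w2 = L"
    and cod: "ccod C w1 = ccod C w2"
    and e: "\<forall>b\<in>S. cmp C w1 (lam b) = cmp C w2 (lam b)"
  shows "w1 = w2"
proof -
  note D = chainD[OF cl]
  define mu where "mu b = cmp C w1 (lam b)" for b
  have Q: "ccod C w1 \<in> obj C" using w1 cod_obj by blast
  have m1: "\<forall>b\<in>S. mu b \<in> hom C (X b) (ccod C w1)"
    unfolding mu_def hom_iff using D w1 by simp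
  have m2: "\<forall>b\<in>S. \<forall>c\<in>S. (b, c) \<in> r \<longrightarrow> cmp C (mu c) (T b c) = mu b"
  proof (intro ballI impI)
    fix b c assume bc: "b \<in> S" "c \<in> S" "(b, c) \<in> r"
    have "cmp C (cmp C w1 (lam c)) (T b c) = cmp C w1 (cmp C (lam c) (T b c))"
      using assoc_r[of "T b c" "lam c" w1] bc Th D w1 by simp
    then show "cmp C (mu c) (T b c) = mu b" unfolding mu_def using D(5)[OF bc] by simp
  qed
  have "\<exists>!w. w \<in> hom C L (ccod C w1) \<and> (\<forall>b\<in>S. cmp C w (lam b) = mu b)"
    using cl Q m1 m2 unfolding chain_colimit_def by blast
  moreover have "w1 \<in> hom C L (ccod C w1)" "w2 \<in> hom C L (ccod C w1)"
    using w1 w2 cod unfolding hom_iff by simp_all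
  ultimately show ?thesis using e unfolding mu_def by metis
qed

end

locale seqsetup = catC C for C :: "('o, 'm) cat" +
  fixes xt :: "'x itself" and I :: "'m set" and r :: "'i rel" and X :: "'i \<Rightarrow> 'o"
    and T :: "'i \<Rightarrow> 'i \<Rightarrow> 'm" and L :: 'o and lam :: "'i \<Rightarrow> 'm" and b0 :: 'i
    and e2 :: "'i \<times> 'i \<Rightarrow> 'x"
  assumes cc: "cocomplete TYPE('x) C" and inf: "infinite (UNIV :: 'x set)" and e2: "inj e2"
    and IA: "I \<subseteq> arr C"
    and wo: "Well_order r" and b0F: "b0 \<in> Field r" and b0min: "\<forall>b\<in>Field r. (b0, b) \<in> r"
    and ts: "tseq C (base_changes C (Phi C I)) r X T"
    and colX: "chain_colimit C r (Field r) X T L lam"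
begin

lemma refl: "a \<in> Field r \<Longrightarrow> (a, a) \<in> r"
  using wo_rel.REFL[OF wo_rel.intro[OF wo]] unfolding refl_on_def by blast
lemma trans: "(a, b) \<in> r \<Longrightarrow> (b, c) \<in> r \<Longrightarrow> (a, c) \<in> r"
  using wo_rel.TRANS[OF wo_rel.intro[OF wo]] unfolding trans_def by blast
lemma antisym: "(a, b) \<in> r \<Longrightarrow> (b, a) \<in> r \<Longrightarrow> a = b"
  using wo_rel.ANTISYM[OF wo_rel.intro[OF wo]] unfolding antisym_def by blast
lemma total: "a \<in> Field r \<Longrightarrow> b \<in> Field r \<Longrightarrow> (a, b) \<in> r \<or> (b, a) \<in> r"
  using wo_rel.TOTALS[OF wo_rel.intro[OF wo]] by blast
lemma FieldL: "(a, b) \<in> r \<Longrightarrow> a \<in> Field r" unfolding Field_def by blast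
lemma FieldR: "(a, b) \<in> r \<Longrightarrow> b \<in> Field r" unfolding Field_def by blast
lemma trans_r: "Relation.trans r" unfolding trans_def using trans by blast

lemma imm_uniq: "immediate_succ r b c \<Longrightarrow> immediate_succ r b' c \<Longrightarrow> b = b'"
  unfolding immediate_succ_def using total FieldL by metis

lemma imm_le: "immediate_succ r b c \<Longrightarrow> (a, c) \<in> r \<Longrightarrow> a \<noteq> c \<Longrightarrow> (a, b) \<in> r"
  unfolding immediate_succ_def using total FieldL refl by metis

lemma b0_least: "(a, b0) \<in> r \<Longrightarrow> a = b0"
  using b0min antisym FieldL by blast

lemma not_imm_b0: "\<not> immediate_succ r b b0"
  unfolding immediate_succ_def using b0_least by blast

lemma lim_case: "c \<in> Field r \<Longrightarrow> c \<noteq> b0 \<Longrightarrow> \<not> (\<exists>b. immediate_succ r b c) \<Longrightarrow> limit_point r c"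
  unfolding limit_point_def using b0min by blast

lemma underS_iff: "a \<in> underS r c \<longleftrightarrow> (a, c) \<in> r \<and> a \<noteq> c"
  unfolding underS_def by blast

definition pr :: "'i \<Rightarrow> 'i" where "pr c = (THE b. immediate_succ r b c)"

lemma pr: "immediate_succ r b c \<Longrightarrow> pr c = b"
  unfolding pr_def using imm_uniq by blast

definition sel :: "'i \<Rightarrow> 'm \<times> 'm \<times> 'm" where
  "sel c = (SOME (f, g, g'). f \<in> Phi C I \<and> is_pushout C f g (T (pr c) c) g')"
definition gg where "gg c = fst (sel c)"
definition uu where "uu c = fst (snd (sel c))"
definition gg' where "gg' c = snd (snd (sel c))"
definition kk where "kk c = (SOME k. k \<in> I \<and> k \<in> arr C \<and> cdom C k = ccod C (gg c) \<and> cmp C k (gg c) \<in> I)"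

lemma sel_props:
  assumes "immediate_succ r b c"
  shows "gg c \<in> Phi C I" "is_pushout C (gg c) (uu c) (T b c) (gg' c)"
    "kk c \<in> I" "kk c \<in> arr C" "cdom C (kk c) = ccod C (gg c)" "cmp C (kk c) (gg c) \<in> I"
proof -
  have "T b c \<in> base_changes C (Phi C I)" using ts assms unfolding tseq_def by blast
  then have "\<exists>x. (\<lambda>(f, g, g'). f \<in> Phi C I \<and> is_pushout C f g (T (pr c) c) g') x"
    unfolding base_changes_def pr[OF assms] by auto
  then have s: "(\<lambda>(f, g, g'). f \<in> Phi C I \<and> is_pushout C f g (T (pr c) c) g') (sel c)"
    unfolding sel_def by (rule someI_ex)
  then show g: "gg c \<in> Phi C I" "is_pushout C (gg c) (uu c) (T b c) (gg' c)"
    unfolding gg_def uu_def gg'_def pr[OF assms] by (auto split: prod.splits)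
  then have "\<exists>k. k \<in> I \<and> k \<in> arr C \<and> cdom C k = ccod C (gg c) \<and> cmp C k (gg c) \<in> I"
    unfolding Phi_def by blast
  then have "kk c \<in> I \<and> kk c \<in> arr C \<and> cdom C (kk c) = ccod C (gg c) \<and> cmp C (kk c) (gg c) \<in> I"
    unfolding kk_def by (rule someI_ex)
  then show "kk c \<in> I" "kk c \<in> arr C" "cdom C (kk c) = ccod C (gg c)" "cmp C (kk c) (gg c) \<in> I"
    by auto
qed

definition kg where "kg c = cmp C (kk c) (gg c)"

type_synonym ('oo, 'mm, 'ii) yval = "'oo \<times> ('ii \<Rightarrow> 'mm) \<times> 'mm"

definition H0 :: "('i \<Rightarrow> 'o \<times> ('i \<Rightarrow> 'm) \<times> 'm) \<Rightarrow> 'i \<Rightarrow> 'o \<times> ('i \<Rightarrow> 'm) \<times> 'm" where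
  "H0 F c =
    (if c = b0 then (X b0, \<lambda>a. idt C (X b0), idt C (X b0))
     else if (\<exists>b. immediate_succ r b c) then
       (let b = pr c; Tb = fst (snd (F b)); pb = snd (snd (F b));
            vz = (SOME (v, z). is_pushout C (kg c) (cmp C pb (uu c)) v z);
            v = fst vz; z = snd vz;
            pc = (THE w. w \<in> hom C (X c) (ccod C v) \<and> cmp C w (T b c) = cmp C v pb \<and> cmp C w (gg' c) = cmp C z (kk c))
        in (ccod C v, \<lambda>a. if a = c then idt C (ccod C v) else cmp C v (Tb a), pc))
     else
       (let Yf = (\<lambda>a. fst (F a)); Tf = (\<lambda>a a'. fst (snd (F a')) a); pf = (\<lambda>a. snd (snd (F a)));
            Lm = (SOME Lm. chain_colimit C r (underS r c) Yf Tf (fst Lm) (snd Lm));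
            pc = (THE w. w \<in> hom C (X c) (fst Lm) \<and> (\<forall>a\<in>underS r c. cmp C w (T a c) = cmp C (snd Lm a) (pf a)))
        in (fst Lm, \<lambda>a. if a = c then idt C (fst Lm) else snd Lm a, pc)))"

definition H :: "('i \<Rightarrow> 'o \<times> ('i \<Rightarrow> 'm) \<times> 'm) \<Rightarrow> 'i \<Rightarrow> 'o \<times> ('i \<Rightarrow> 'm) \<times> 'm" where
  "H F c = H0 (\<lambda>a. if a \<in> underS r c then F a else undefined) c"

lemma adm: "wo_rel.adm_wo r H"
  unfolding wo_rel.adm_wo_def[OF wo_rel.intro[OF wo]] H_def
proof (intro allI impI)
  fix f g :: "'i \<Rightarrow> 'o \<times> ('i \<Rightarrow> 'm) \<times> 'm" and x
  assume "\<forall>y\<in>underS r x. f y = g y"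
  then have "(\<lambda>a. if a \<in> underS r x then f a else undefined) = (\<lambda>a. if a \<in> underS r x then g a else undefined)"
    by auto
  then show "H0 (\<lambda>a. if a \<in> underS r x then f a else undefined) x = H0 (\<lambda>a. if a \<in> underS r x then g a else undefined) x"
    by simp
qed

definition Yrec where "Yrec = wo_rel.worec r H"
definition Y where "Y c = fst (Yrec c)"
definition TY where "TY a c = fst (snd (Yrec c)) a"
definition p where "p c = snd (snd (Yrec c))"

lemma Yrec_eq: "Yrec c = H Yrec c"
  unfolding Yrec_def using wo_rel.worec_fixpoint[OF wo_rel.intro[OF wo] adm] by metis

definition vz where "vz c = (SOME (v, z). is_pushout C (kg c) (cmp C (p (pr c)) (uu c)) v z)"
definition vv where "vv c = fst (vz c)"
definition zz where "zz c = snd (vz c)"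
definition Lm where "Lm c = (SOME Lm. chain_colimit C r (underS r c) Y TY (fst Lm) (snd Lm))"

lemma Y_b0: "Y b0 = X b0" "TY a b0 = idt C (X b0)" "p b0 = idt C (X b0)"
  using Yrec_eq[of b0] unfolding H_def H0_def Y_def TY_def p_def by simp_all

lemma Y_succ:
  assumes "immediate_succ r b c"
  shows "Y c = ccod C (vv c)"
    "TY a c = (if a = c then idt C (ccod C (vv c)) else cmp C (vv c) (TY a b))"
    "p c = (THE w. w \<in> hom C (X c) (ccod C (vv c)) \<and> cmp C w (T b c) = cmp C (vv c) (p b) \<and> cmp C w (gg' c) = cmp C (zz c) (kk c))"
proof -
  have c: "c \<noteq> b0" using assms not_imm_b0 by blast
  have bu: "b \<in> underS r c" using assms unfolding immediate_succ_def underS_def by blast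
  have e: "Yrec c = H0 (\<lambda>a. if a \<in> underS r c then Yrec a else undefined) c"
    using Yrec_eq[of c] unfolding H_def .
  show "Y c = ccod C (vv c)"
    "TY a c = (if a = c then idt C (ccod C (vv c)) else cmp C (vv c) (TY a b))"
    "p c = (THE w. w \<in> hom C (X c) (ccod C (vv c)) \<and> cmp C w (T b c) = cmp C (vv c) (p b) \<and> cmp C w (gg' c) = cmp C (zz c) (kk c))"
    using e c assms bu unfolding H0_def Y_def TY_def p_def vv_def zz_def vz_def pr[OF assms] Let_def
    by auto
qed

lemma Y_lim:
  assumes "c \<in> Field r" "c \<noteq> b0" "\<not> (\<exists>b. immediate_succ r b c)"
  shows "Y c = fst (Lm c)"
    "TY a c = (if a = c then idt C (fst (Lm c)) else snd (Lm c) a)"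
    "p c = (THE w. w \<in> hom C (X c) (fst (Lm c)) \<and> (\<forall>a\<in>underS r c. cmp C w (T a c) = cmp C (snd (Lm c) a) (p a)))"
proof -
  let ?F = "(\<lambda>a. if a \<in> underS r c then Yrec a else undefined)"
  have e: "Yrec c = H0 ?F c"
    using Yrec_eq[of c] unfolding H_def .
  have "chain_colimit C r (underS r c) (\<lambda>a. fst (?F a)) (\<lambda>a a'. fst (snd (?F a')) a) L' lam' =
        chain_colimit C r (underS r c) Y TY L' lam'" for L' lam'
    by (rule chain_colimit_cong) (simp_all add: Y_def TY_def)
  then have lm: "(SOME Lm. chain_colimit C r (underS r c) (\<lambda>a. fst (?F a)) (\<lambda>a a'. fst (snd (?F a')) a) (fst Lm) (snd Lm)) = Lm c"
    unfolding Lm_def by simp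
  have th: "(THE w. w \<in> hom C (X c) (fst (Lm c)) \<and> (\<forall>a\<in>underS r c. cmp C w (T a c) = cmp C (snd (Lm c) a) (snd (snd (?F a))))) =
     (THE w. w \<in> hom C (X c) (fst (Lm c)) \<and> (\<forall>a\<in>underS r c. cmp C w (T a c) = cmp C (snd (Lm c) a) (p a)))"
    unfolding p_def by (rule arg_cong[where f = The]) (auto cong: ball_cong)
  show "Y c = fst (Lm c)"
    "TY a c = (if a = c then idt C (fst (Lm c)) else snd (Lm c) a)"
    "p c = (THE w. w \<in> hom C (X c) (fst (Lm c)) \<and> (\<forall>a\<in>underS r c. cmp C w (T a c) = cmp C (snd (Lm c) a) (p a)))"
    using e assms lm th unfolding H0_def Y_def TY_def Let_def
    by (simp_all add: p_def)
qed

end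

context seqsetup begin

lemma Xobj: "b \<in> Field r \<Longrightarrow> X b \<in> obj C"
  using ts unfolding tseq_def by blast
lemma T_hom: "(b, c) \<in> r \<Longrightarrow> T b c \<in> arr C" "(b, c) \<in> r \<Longrightarrow> cdom C (T b c) = X b"
  "(b, c) \<in> r \<Longrightarrow> ccod C (T b c) = X c"
  using ts unfolding tseq_def hom_iff by blast+
lemma Tid: "b \<in> Field r \<Longrightarrow> T b b = idt C (X b)"
  using ts unfolding tseq_def by blast
lemma Tcomp: "(b, c) \<in> r \<Longrightarrow> (c, d) \<in> r \<Longrightarrow> cmp C (T c d) (T b c) = T b d"
  using ts unfolding tseq_def by blast
lemma Xlim: "limit_point r c \<Longrightarrow> chain_colimit C r (underS r c) X T (X c) (\<lambda>b. T b c)"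
  using ts unfolding tseq_def by blast

lemma succ_facts:
  assumes imm: "immediate_succ r b c"
    and pb: "p b \<in> arr C" "cdom C (p b) = X b" "ccod C (p b) = Y b"
  shows "is_pushout C (kg c) (cmp C (p b) (uu c)) (vv c) (zz c)"
    "vv c \<in> arr C" "cdom C (vv c) = Y b" "zz c \<in> arr C" "cdom C (zz c) = ccod C (kk c)"
    "ccod C (zz c) = ccod C (vv c)"
    "p c \<in> arr C" "cdom C (p c) = X c" "ccod C (p c) = ccod C (vv c)"
    "cmp C (p c) (T b c) = cmp C (vv c) (p b)" "cmp C (p c) (gg' c) = cmp C (zz c) (kk c)"
proof -
  note S = sel_props[OF imm]
  note D = pushoutD[OF S(2)]
  have bc: "(b, c) \<in> r" using imm unfolding immediate_succ_def by blast
  note Tb = T_hom[OF bc]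
  have uucod: "ccod C (uu c) = X b" using D(6) Tb by simp
  have kg: "kg c \<in> arr C" "cdom C (kg c) = cdom C (gg c)" "ccod C (kg c) = ccod C (kk c)"
    unfolding kg_def using S D by simp_all
  have pu: "cmp C (p b) (uu c) \<in> arr C" "cdom C (cmp C (p b) (uu c)) = cdom C (uu c)"
    "ccod C (cmp C (p b) (uu c)) = Y b"
    using pb D uucod by simp_all
  have "\<exists>v z. is_pushout C (kg c) (cmp C (p b) (uu c)) v z"
    using pushout_exists[OF cc inf kg(1) pu(1)] kg pu D by simp
  then have "\<exists>x. (\<lambda>(v, z). is_pushout C (kg c) (cmp C (p (pr c)) (uu c)) v z) x"
    unfolding pr[OF imm] by auto
  then have "(\<lambda>(v, z). is_pushout C (kg c) (cmp C (p (pr c)) (uu c)) v z) (vz c)"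
    unfolding vz_def by (rule someI_ex)
  then show poY: "is_pushout C (kg c) (cmp C (p b) (uu c)) (vv c) (zz c)"
    unfolding vv_def zz_def pr[OF imm] by (simp split: prod.splits)
  note DY = pushoutD[OF poY]
  show v: "vv c \<in> arr C" "cdom C (vv c) = Y b" "zz c \<in> arr C" "cdom C (zz c) = ccod C (kk c)"
    "ccod C (zz c) = ccod C (vv c)"
    using DY kg pu by simp_all
  let ?u = "cmp C (vv c) (p b)" and ?v = "cmp C (zz c) (kk c)"
  have uv: "?u \<in> arr C" "?v \<in> arr C" "cdom C ?u = ccod C (uu c)" "cdom C ?v = ccod C (gg c)"
      "ccod C ?u = ccod C ?v"
    using v pb S uucod by simp_all
  have "cmp C ?u (uu c) = cmp C (vv c) (cmp C (p b) (uu c))"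
    using assoc_r[of "uu c" "p b" "vv c"] D pb v uucod by simp
  also have "\<dots> = cmp C (zz c) (kg c)" using DY(9) .
  also have "\<dots> = cmp C ?v (gg c)"
    unfolding kg_def using assoc_r[of "gg c" "kk c" "zz c"] S D v by simp
  finally have uv2: "cmp C ?u (uu c) = cmp C ?v (gg c)" .
  obtain w where w: "w \<in> arr C" "cdom C w = ccod C (T b c)" "ccod C w = ccod C ?u"
    "cmp C w (T b c) = ?u" "cmp C w (gg' c) = ?v"
    using pushout_UP[OF S(2) uv uv2] by blast
  have "p c = w"
  proof -
    have "p c = (THE w. w \<in> hom C (X c) (ccod C (vv c)) \<and> cmp C w (T b c) = ?u \<and> cmp C w (gg' c) = ?v)"
      using Y_succ(3)[OF imm] .
    also have "\<dots> = w"
    proof (rule the_equality)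
      show "w \<in> hom C (X c) (ccod C (vv c)) \<and> cmp C w (T b c) = ?u \<and> cmp C w (gg' c) = ?v"
        using w Tb v pb unfolding hom_iff by simp
      fix w' assume w': "w' \<in> hom C (X c) (ccod C (vv c)) \<and> cmp C w' (T b c) = ?u \<and> cmp C w' (gg' c) = ?v"
      show "w' = w"
        by (rule pushout_uniq[OF S(2)]) (use w w' Tb v pb in \<open>simp_all add: hom_iff\<close>)
    qed
    finally show ?thesis .
  qed
  then show "p c \<in> arr C" "cdom C (p c) = X c" "ccod C (p c) = ccod C (vv c)"
    "cmp C (p c) (T b c) = cmp C (vv c) (p b)" "cmp C (p c) (gg' c) = cmp C (zz c) (kk c)"
    using w Tb v pb by simp_all
qed


definition inv :: "'i \<Rightarrow> bool" where
  "inv c \<longleftrightarrow> Y c \<in> obj C \<and> p c \<in> arr C \<and> cdom C (p c) = X c \<and> ccod C (p c) = Y c \<and>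
     (\<forall>a. (a, c) \<in> r \<longrightarrow> TY a c \<in> arr C \<and> cdom C (TY a c) = Y a \<and> ccod C (TY a c) = Y c \<and>
          cmp C (p c) (T a c) = cmp C (TY a c) (p a)) \<and>
     TY c c = idt C (Y c) \<and>
     (\<forall>a a'. (a, a') \<in> r \<and> (a', c) \<in> r \<longrightarrow> cmp C (TY a' c) (TY a a') = TY a c)"

lemma lim_facts:
  assumes c: "c \<in> Field r" "c \<noteq> b0" "\<not> (\<exists>b. immediate_succ r b c)"
    and IH: "\<forall>a\<in>underS r c. inv a"
  shows "chain_colimit C r (underS r c) Y TY (fst (Lm c)) (snd (Lm c))"
    "p c \<in> arr C" "cdom C (p c) = X c" "ccod C (p c) = fst (Lm c)"
    "\<forall>a\<in>underS r c. cmp C (p c) (T a c) = cmp C (snd (Lm c) a) (p a)"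
proof -
  let ?S = "underS r c"
  have lp: "limit_point r c" using lim_case[OF c] .
  have ex: "\<exists>L' lam'. chain_colimit C r ?S Y TY L' lam'"
  proof (rule chain_colimit_exists[OF cc e2])
    show "\<forall>b\<in>?S. (b, b) \<in> r" using refl FieldL by (auto simp: underS_iff)
    show "Relation.trans r" by (rule trans_r)
    show "\<forall>b\<in>?S. Y b \<in> obj C" using IH unfolding inv_def by blast
    show "\<forall>b\<in>?S. \<forall>c\<in>?S. (b, c) \<in> r \<longrightarrow> TY b c \<in> hom C (Y b) (Y c)"
      using IH unfolding inv_def hom_iff by blast
    show "\<forall>b\<in>?S. TY b b = idt C (Y b)" using IH unfolding inv_def by blast
    show "\<forall>b\<in>?S. \<forall>c\<in>?S. \<forall>d\<in>?S. (b, c) \<in> r \<and> (c, d) \<in> r \<longrightarrow> cmp C (TY c d) (TY b c) = TY b d"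
      using IH unfolding inv_def by blast
  qed
  then have "\<exists>x. chain_colimit C r ?S Y TY (fst x) (snd x)" by auto
  then show cl: "chain_colimit C r ?S Y TY (fst (Lm c)) (snd (Lm c))"
    unfolding Lm_def by (rule someI_ex)
  note D = chainD[OF cl]
  note DX = chainD[OF Xlim[OF lp]]
  define mu where "mu a = cmp C (snd (Lm c) a) (p a)" for a
  have m1: "\<forall>a\<in>?S. mu a \<in> hom C (X a) (fst (Lm c))"
    unfolding mu_def hom_iff using D IH unfolding inv_def by simp
  have m2: "\<forall>a\<in>?S. \<forall>a'\<in>?S. (a, a') \<in> r \<longrightarrow> cmp C (mu a') (T a a') = mu a"
  proof (intro ballI impI)
    fix a a' assume aa: "a \<in> ?S" "a' \<in> ?S" "(a, a') \<in> r"
    have ia: "inv a" "inv a'" using IH aa by auto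
    note Ta = T_hom[OF aa(3)]
    have t: "TY a a' \<in> arr C" "cdom C (TY a a') = Y a" "ccod C (TY a a') = Y a'"
      "cmp C (p a') (T a a') = cmp C (TY a a') (p a)"
      using ia(2) aa(3) unfolding inv_def by blast+
    have pa: "p a \<in> arr C" "cdom C (p a) = X a" "ccod C (p a) = Y a"
      "p a' \<in> arr C" "cdom C (p a') = X a'" "ccod C (p a') = Y a'"
      using ia unfolding inv_def by blast+
    have "cmp C (mu a') (T a a') = cmp C (snd (Lm c) a') (cmp C (p a') (T a a'))"
      unfolding mu_def using assoc_r[of "T a a'" "p a'" "snd (Lm c) a'"] Ta pa D aa by simp
    also have "\<dots> = cmp C (snd (Lm c) a') (cmp C (TY a a') (p a))" using t by simp
    also have "\<dots> = cmp C (cmp C (snd (Lm c) a') (TY a a')) (p a)"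
      using assoc[of "p a" "TY a a'" "snd (Lm c) a'"] t pa D aa by simp
    also have "\<dots> = mu a" unfolding mu_def using D(5)[OF aa] by simp
    finally show "cmp C (mu a') (T a a') = mu a" .
  qed
  obtain w where w: "w \<in> arr C" "cdom C w = X c" "ccod C w = fst (Lm c)" "\<forall>a\<in>?S. cmp C w (T a c) = mu a"
    using chain_UP[OF Xlim[OF lp] D(1) m1 m2] by blast
  have Th: "\<forall>b\<in>?S. \<forall>c\<in>?S. (b, c) \<in> r \<longrightarrow> T b c \<in> arr C \<and> ccod C (T b c) = X c"
    using T_hom by blast
  have "p c = w"
  proof -
    have "p c = (THE w. w \<in> hom C (X c) (fst (Lm c)) \<and> (\<forall>a\<in>?S. cmp C w (T a c) = mu a))"
      using Y_lim(3)[OF c] unfolding mu_def .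
    also have "\<dots> = w"
    proof (rule the_equality)
      show "w \<in> hom C (X c) (fst (Lm c)) \<and> (\<forall>a\<in>?S. cmp C w (T a c) = mu a)"
        using w unfolding hom_iff by simp
      fix w' assume w': "w' \<in> hom C (X c) (fst (Lm c)) \<and> (\<forall>a\<in>?S. cmp C w' (T a c) = mu a)"
      show "w' = w"
        by (rule chain_uniq[OF Xlim[OF lp] Th]) (use w w' in \<open>simp_all add: hom_iff\<close>)
    qed
    finally show ?thesis .
  qed
  then show "p c \<in> arr C" "cdom C (p c) = X c" "ccod C (p c) = fst (Lm c)"
    "\<forall>a\<in>?S. cmp C (p c) (T a c) = cmp C (snd (Lm c) a) (p a)"
    using w unfolding mu_def by simp_all
qed


lemma inv_b0: "inv b0"
proof -
  have o: "X b0 \<in> obj C" using Xobj b0F by blast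
  have a: "(a, b0) \<in> r \<Longrightarrow> a = b0" for a using b0_least by blast
  show ?thesis unfolding inv_def Y_b0
  proof (intro conjI allI impI)
    fix a assume "(a, b0) \<in> r"
    then have ab: "a = b0" by (rule a)
    show "idt C (X b0) \<in> arr C" "ccod C (idt C (X b0)) = X b0" using o by simp_all
    show "cdom C (idt C (X b0)) = Y a" using o ab Y_b0 by simp
    show "cmp C (idt C (X b0)) (T a b0) = cmp C (idt C (X b0)) (p a)"
      using ab o Tid[OF b0F] Y_b0 by simp
  next
    fix a a' assume "(a, a') \<in> r \<and> (a', b0) \<in> r"
    then have "a = b0" "a' = b0" using a by blast+
    then show "cmp C (idt C (X b0)) (TY a a') = idt C (X b0)" using o Y_b0 by simp
  qed (use o in simp_all)
qed

lemma inv_succ: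
  assumes imm: "immediate_succ r b c" and IH: "\<forall>a\<in>underS r c. inv a"
  shows "inv c"
proof -
  have bc: "(b, c) \<in> r" "b \<noteq> c" using imm unfolding immediate_succ_def by blast+
  have ib: "inv b" using IH bc by (simp add: underS_iff)
  have pb: "p b \<in> arr C" "cdom C (p b) = X b" "ccod C (p b) = Y b" using ib unfolding inv_def by blast+
  note F = succ_facts[OF imm pb]
  note Yc = Y_succ[OF imm]
  have cF: "c \<in> Field r" using bc FieldR by blast
  have Yo: "Y c \<in> obj C" using Yc(1) F(2) cod_obj by simp
  have TYb: "(a, b) \<in> r \<Longrightarrow> TY a b \<in> arr C \<and> cdom C (TY a b) = Y a \<and> ccod C (TY a b) = Y b \<and>
          cmp C (p b) (T a b) = cmp C (TY a b) (p a)" for a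
    using ib unfolding inv_def by blast
  have TYc: "TY a c \<in> arr C \<and> cdom C (TY a c) = Y a \<and> ccod C (TY a c) = Y c \<and>
          cmp C (p c) (T a c) = cmp C (TY a c) (p a)" if ac: "(a, c) \<in> r" for a
  proof (cases "a = c")
    case True
    then show ?thesis using Yc Yo F Tid[OF cF] by simp
  next
    case False
    have ab: "(a, b) \<in> r" using imm_le[OF imm ac False] .
    note t = TYb[OF ab]
    have ia: "inv a" using IH ac False by (simp add: underS_iff)
    have pa: "p a \<in> arr C" "cdom C (p a) = X a" "ccod C (p a) = Y a" using ia unfolding inv_def by blast+
    note Tab = T_hom[OF ab] and Tbc = T_hom[OF bc(1)]
    have "cmp C (p c) (T a c) = cmp C (p c) (cmp C (T b c) (T a b))" using Tcomp[OF ab bc(1)] by simp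
    also have "\<dots> = cmp C (cmp C (p c) (T b c)) (T a b)"
      using assoc[of "T a b" "T b c" "p c"] Tab Tbc F by simp
    also have "\<dots> = cmp C (vv c) (cmp C (p b) (T a b))"
      using F(10) assoc_r[of "T a b" "p b" "vv c"] Tab pb F by simp
    also have "\<dots> = cmp C (cmp C (vv c) (TY a b)) (p a)"
      using t assoc[of "p a" "TY a b" "vv c"] pa F by simp
    finally show ?thesis using Yc(2)[of a] False t F Yc(1) by simp
  qed
  show ?thesis unfolding inv_def
  proof (intro conjI allI impI)
    show "Y c \<in> obj C" by (rule Yo)
    show "p c \<in> arr C" "cdom C (p c) = X c" "ccod C (p c) = Y c" using F Yc by simp_all
    fix a assume ac: "(a, c) \<in> r"
    show "TY a c \<in> arr C" "cdom C (TY a c) = Y a" "ccod C (TY a c) = Y c"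
      "cmp C (p c) (T a c) = cmp C (TY a c) (p a)" using TYc[OF ac] by simp_all
  next
    show "TY c c = idt C (Y c)" using Yc by simp
  next
    fix a a' assume aa: "(a, a') \<in> r \<and> (a', c) \<in> r"
    show "cmp C (TY a' c) (TY a a') = TY a c"
    proof (cases "a' = c")
      case True
      then show ?thesis using TYc[of a] aa Yc(2)[of c] Yc(1) by simp
    next
      case False
      have a'b: "(a', b) \<in> r" using imm_le[OF imm _ False] aa by blast
      have ac: "a \<noteq> c" using aa False antisym by blast
      have ab: "(a, b) \<in> r" using trans aa a'b by blast
      have ia': "inv a'" using IH aa False by (simp add: underS_iff)
      have t: "TY a a' \<in> arr C" "ccod C (TY a a') = Y a'" using ia' aa unfolding inv_def by blast+
      have "cmp C (TY a' c) (TY a a') = cmp C (vv c) (cmp C (TY a' b) (TY a a'))"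
        using Yc(2)[of a'] False assoc_r[of "TY a a'" "TY a' b" "vv c"] t TYb[OF a'b] F by simp
      also have "\<dots> = cmp C (vv c) (TY a b)" using ib aa a'b unfolding inv_def by simp
      finally show ?thesis using Yc(2)[of a] ac by simp
    qed
  qed
qed

lemma inv_lim:
  assumes c: "c \<in> Field r" "c \<noteq> b0" "\<not> (\<exists>b. immediate_succ r b c)"
    and IH: "\<forall>a\<in>underS r c. inv a"
  shows "inv c"
proof -
  note F = lim_facts[OF c IH]
  note Yc = Y_lim[OF c]
  note D = chainD[OF F(1)]
  have Yo: "Y c \<in> obj C" using Yc(1) D(1) by simp
  have TYc: "TY a c \<in> arr C \<and> cdom C (TY a c) = Y a \<and> ccod C (TY a c) = Y c \<and>
          cmp C (p c) (T a c) = cmp C (TY a c) (p a)" if ac: "(a, c) \<in> r" for a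
  proof (cases "a = c")
    case True
    then show ?thesis using Yc Yo F Tid[OF c(1)] by simp
  next
    case False
    then have "a \<in> underS r c" using ac by (simp add: underS_iff)
    then show ?thesis using D F Yc False by simp
  qed
  show ?thesis unfolding inv_def
  proof (intro conjI allI impI)
    show "Y c \<in> obj C" by (rule Yo)
    show "p c \<in> arr C" "cdom C (p c) = X c" "ccod C (p c) = Y c" using F Yc by simp_all
    fix a assume ac: "(a, c) \<in> r"
    show "TY a c \<in> arr C" "cdom C (TY a c) = Y a" "ccod C (TY a c) = Y c"
      "cmp C (p c) (T a c) = cmp C (TY a c) (p a)" using TYc[OF ac] by simp_all
  next
    show "TY c c = idt C (Y c)" using Yc by simp
  next
    fix a a' assume aa: "(a, a') \<in> r \<and> (a', c) \<in> r"
    show "cmp C (TY a' c) (TY a a') = TY a c"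
    proof (cases "a' = c")
      case True
      then show ?thesis using TYc[of a] aa Yc(2)[of c] Yc(1) by simp
    next
      case False
      have ac: "a \<noteq> c" using aa False antisym by blast
      have u: "a \<in> underS r c" "a' \<in> underS r c" using aa False ac trans by (auto simp: underS_iff)
      show ?thesis using D(5)[OF u aa[THEN conjunct1]] Yc(2)[of a] Yc(2)[of a'] False ac by simp
    qed
  qed
qed

lemma inv_all: "c \<in> Field r \<Longrightarrow> inv c"
proof (induction c rule: wo_rel.well_order_induct[OF wo_rel.intro[OF wo]])
  case (1 c)
  have IH: "\<forall>a\<in>underS r c. inv a" using 1 FieldL by (auto simp: underS_iff)
  show ?case
  proof (cases "c = b0")
    case True then show ?thesis using inv_b0 by simp
  next
    case False
    show ?thesis
    proof (cases "\<exists>b. immediate_succ r b c")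
      case True
      then obtain b where "immediate_succ r b c" by blast
      then show ?thesis using inv_succ IH by blast
    next
      case nb: False
      show ?thesis using inv_lim[OF 1(2) False nb IH] .
    qed
  qed
qed

end

context catC begin

lemma pushout_id2:
  assumes f: "f \<in> arr C"
  shows "is_pushout C f (idt C (cdom C f)) f (idt C (ccod C f))"
proof -
  have o: "cdom C f \<in> obj C" "ccod C f \<in> obj C" using f dom_obj cod_obj by auto
  show ?thesis unfolding is_pushout_def hom_iff
  proof (intro conjI allI impI)
    fix u v assume uv: "u \<in> arr C \<and> v \<in> arr C \<and> cdom C u = ccod C (idt C (cdom C f)) \<and> cdom C v = ccod C f \<and>
       ccod C u = ccod C v \<and> cmp C u (idt C (cdom C f)) = cmp C v f"
    show "\<exists>!w. (w \<in> arr C \<and> cdom C w = ccod C f \<and> ccod C w = ccod C u) \<and>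
             cmp C w f = u \<and> cmp C w (idt C (ccod C f)) = v"
      apply (rule ex1I[of _ v]) using uv o by auto
  qed (use f o in simp_all)
qed

lemma comm:
  assumes sS: "s \<in> S"
    and tot: "\<forall>b\<in>S. \<forall>c\<in>S. (b, c) \<in> r \<or> (c, b) \<in> r"
    and TX: "\<forall>b\<in>S. \<forall>c\<in>S. (b, c) \<in> r \<longrightarrow> TX b c \<in> arr C \<and> cdom C (TX b c) = X b \<and> ccod C (TX b c) = X c"
    and TY: "\<forall>b\<in>S. \<forall>c\<in>S. (b, c) \<in> r \<longrightarrow> TY b c \<in> arr C \<and> cdom C (TY b c) = Y b \<and> ccod C (TY b c) = Y c"
    and p: "\<forall>b\<in>S. p b \<in> arr C \<and> cdom C (p b) = X b \<and> ccod C (p b) = Y b"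
    and clX: "chain_colimit C r S X TX XS al"
    and clY: "chain_colimit C r S Y TY YS be"
    and pS: "pS \<in> arr C" "cdom C pS = XS" "ccod C pS = YS" "\<forall>b\<in>S. cmp C pS (al b) = cmp C (be b) (p b)"
    and a: "a \<in> arr C" "cdom C a = XS" "ccod C a = Lo"
    and poW: "\<forall>b\<in>S. is_pushout C (p b) (cmp C a (al b)) (ll b) (qq b)"
    and W: "\<forall>b\<in>S. W b = ccod C (ll b)"
    and TW: "\<forall>b\<in>S. \<forall>c\<in>S. (b, c) \<in> r \<longrightarrow> TW b c \<in> arr C \<and> cdom C (TW b c) = W b \<and> ccod C (TW b c) = W c \<and>
        cmp C (TW b c) (ll b) = ll c \<and> cmp C (TW b c) (qq b) = cmp C (qq c) (TY b c)"
    and poP: "is_pushout C pS a lP qP"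
    and om: "\<forall>b\<in>S. om b \<in> arr C \<and> cdom C (om b) = W b \<and> ccod C (om b) = ccod C lP \<and>
        cmp C (om b) (ll b) = lP \<and> cmp C (om b) (qq b) = cmp C qP (be b)"
  shows "chain_colimit C r S W TW (ccod C lP) om"
proof -
  note DP = pushoutD[OF poP]
  note DX = chainD[OF clX] and DY = chainD[OF clY]
  have Wb: "ll b \<in> arr C" "qq b \<in> arr C" "cdom C (ll b) = Lo" "cdom C (qq b) = Y b"
    "ccod C (qq b) = W b" "ccod C (ll b) = W b"
    "cmp C (ll b) (cmp C a (al b)) = cmp C (qq b) (p b)" if "b \<in> S" for b
  proof -
    note D = pushoutD[OF poW[rule_format, OF that]]
    show "ll b \<in> arr C" "qq b \<in> arr C" "cmp C (ll b) (cmp C a (al b)) = cmp C (qq b) (p b)" using D by simp_all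
    show "cdom C (ll b) = Lo" using D(6) a DX that by simp
    show "cdom C (qq b) = Y b" using D(7) p that by simp
    show "ccod C (qq b) = W b" "ccod C (ll b) = W b" using D(8) W that by simp_all
  qed
  have PO: "ccod C lP \<in> obj C" using DP cod_obj by blast
  have lPd: "cdom C lP = Lo" "cdom C qP = YS" "ccod C qP = ccod C lP" using DP a pS by simp_all
  have omh: "\<forall>b\<in>S. om b \<in> hom C (W b) (ccod C lP)" using om unfolding hom_iff by simp
  have omc: "cmp C (om c) (TW b c) = om b" if bc: "b \<in> S" "c \<in> S" "(b, c) \<in> r" for b c
  proof (rule pushout_uniq[OF poW[rule_format, OF bc(1)]])
    have t: "TW b c \<in> arr C" "cdom C (TW b c) = W b" "ccod C (TW b c) = W c"
        "cmp C (TW b c) (ll b) = ll c" "cmp C (TW b c) (qq b) = cmp C (qq c) (TY b c)"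
      using TW bc by blast+
    have o: "om c \<in> arr C" "cdom C (om c) = W c" "ccod C (om c) = ccod C lP"
        "cmp C (om c) (ll c) = lP" "cmp C (om c) (qq c) = cmp C qP (be c)"
      "om b \<in> arr C" "cdom C (om b) = W b" "ccod C (om b) = ccod C lP"
        "cmp C (om b) (ll b) = lP" "cmp C (om b) (qq b) = cmp C qP (be b)"
      using om bc by blast+
    have ty: "TY b c \<in> arr C" "cdom C (TY b c) = Y b" "ccod C (TY b c) = Y c" using TY bc by blast+
    show "cmp C (om c) (TW b c) \<in> arr C" "om b \<in> arr C" using t o by simp_all
    show "cdom C (cmp C (om c) (TW b c)) = ccod C (ll b)" "cdom C (om b) = ccod C (ll b)"
      using t o Wb bc by simp_all
    show "ccod C (cmp C (om c) (TW b c)) = ccod C (om b)" using t o by simp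
    show "cmp C (cmp C (om c) (TW b c)) (ll b) = cmp C (om b) (ll b)"
      using assoc_r[of "ll b" "TW b c" "om c"] t o Wb bc by simp
    have "cmp C (cmp C (om c) (TW b c)) (qq b) = cmp C (om c) (cmp C (qq c) (TY b c))"
      using assoc_r[of "qq b" "TW b c" "om c"] t o Wb bc by simp
    also have "\<dots> = cmp C qP (cmp C (be c) (TY b c))"
      using assoc[of "TY b c" "qq c" "om c"] assoc_r[of "TY b c" "be c" qP] ty o Wb bc DY lPd DP by simp
    also have "\<dots> = cmp C (om b) (qq b)" using DY(5)[OF bc] o by simp
    finally show "cmp C (cmp C (om c) (TW b c)) (qq b) = cmp C (om b) (qq b)" .
  qed
  have up: "\<exists>!w. w \<in> hom C (ccod C lP) Q \<and> (\<forall>b\<in>S. cmp C w (om b) = mu b)"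
    if Q: "Q \<in> obj C" and muh: "\<forall>b\<in>S. mu b \<in> hom C (W b) Q"
      and muc: "\<forall>b\<in>S. \<forall>c\<in>S. (b, c) \<in> r \<longrightarrow> cmp C (mu c) (TW b c) = mu b" for Q mu
  proof -
    have mu: "mu b \<in> arr C" "cdom C (mu b) = W b" "ccod C (mu b) = Q" if "b \<in> S" for b
      using muh that unfolding hom_iff by blast+
    define mL where "mL = cmp C (mu s) (ll s)"
    have mL: "mL \<in> arr C" "cdom C mL = Lo" "ccod C mL = Q" unfolding mL_def using mu Wb sS by simp_all
    have mLb: "cmp C (mu b) (ll b) = mL" if b: "b \<in> S" for b
    proof -
      have aux: "cmp C (mu d) (ll d) = cmp C (mu e) (ll e)" if de: "d \<in> S" "e \<in> S" "(d, e) \<in> r" for d e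
      proof -
        have t: "TW d e \<in> arr C" "cdom C (TW d e) = W d" "ccod C (TW d e) = W e"
          "cmp C (TW d e) (ll d) = ll e" using TW de by blast+
        have "cmp C (mu d) (ll d) = cmp C (cmp C (mu e) (TW d e)) (ll d)" using muc de by simp
        also have "\<dots> = cmp C (mu e) (ll e)"
          using assoc_r[of "ll d" "TW d e" "mu e"] t mu de Wb by simp
        finally show ?thesis .
      qed
      show ?thesis unfolding mL_def using tot b sS aux by metis
    qed
    define nu where "nu b = cmp C (mu b) (qq b)" for b
    have nuh: "\<forall>b\<in>S. nu b \<in> hom C (Y b) Q" unfolding nu_def hom_iff using mu Wb by simp
    have nuc: "\<forall>b\<in>S. \<forall>c\<in>S. (b, c) \<in> r \<longrightarrow> cmp C (nu c) (TY b c) = nu b"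
    proof (intro ballI impI)
      fix b c assume bc: "b \<in> S" "c \<in> S" "(b, c) \<in> r"
      have t: "TW b c \<in> arr C" "cdom C (TW b c) = W b" "ccod C (TW b c) = W c"
        "cmp C (TW b c) (qq b) = cmp C (qq c) (TY b c)" using TW bc by blast+
      have ty: "TY b c \<in> arr C" "cdom C (TY b c) = Y b" "ccod C (TY b c) = Y c" using TY bc by blast+
      have "cmp C (nu c) (TY b c) = cmp C (mu c) (cmp C (qq c) (TY b c))"
        unfolding nu_def using assoc_r[of "TY b c" "qq c" "mu c"] ty mu Wb bc by simp
      also have "\<dots> = cmp C (cmp C (mu c) (TW b c)) (qq b)"
        using t(4)[symmetric] assoc[of "qq b" "TW b c" "mu c"] t mu Wb bc by simp
      also have "\<dots> = nu b" unfolding nu_def using muc bc by simp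
      finally show "cmp C (nu c) (TY b c) = nu b" .
    qed
    obtain mY where mY: "mY \<in> arr C" "cdom C mY = YS" "ccod C mY = Q" "\<forall>b\<in>S. cmp C mY (be b) = nu b"
      using chain_UP[OF clY Q nuh nuc] by blast
    have TX': "\<forall>b\<in>S. \<forall>c\<in>S. (b, c) \<in> r \<longrightarrow> TX b c \<in> arr C \<and> ccod C (TX b c) = X c" using TX by blast
    have TY': "\<forall>b\<in>S. \<forall>c\<in>S. (b, c) \<in> r \<longrightarrow> TY b c \<in> arr C \<and> ccod C (TY b c) = Y c" using TY by blast
    have comp: "cmp C mL a = cmp C mY pS"
    proof (rule chain_uniq[OF clX TX'])
      show "cmp C mL a \<in> arr C" "cdom C (cmp C mL a) = XS" "cmp C mY pS \<in> arr C" "cdom C (cmp C mY pS) = XS"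
        "ccod C (cmp C mL a) = ccod C (cmp C mY pS)" using mL a mY pS by simp_all
      show "\<forall>b\<in>S. cmp C (cmp C mL a) (al b) = cmp C (cmp C mY pS) (al b)"
      proof
        fix b assume b: "b \<in> S"
        have pb: "p b \<in> arr C" "cdom C (p b) = X b" "ccod C (p b) = Y b" using p b by blast+
        have "cmp C (cmp C mL a) (al b) = cmp C (mu b) (cmp C (ll b) (cmp C a (al b)))"
          using assoc_r[of "al b" a mL] assoc_r[of "cmp C a (al b)" "ll b" "mu b"] mLb[OF b] mL a DX b mu Wb
          by simp
        also have "\<dots> = cmp C (nu b) (p b)"
          unfolding nu_def using Wb(7)[OF b] assoc[of "p b" "qq b" "mu b"] pb mu Wb b by simp
        also have "\<dots> = cmp C (cmp C mY pS) (al b)"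
          using assoc_r[of "al b" pS mY] pS(4) b assoc[of "p b" "be b" mY] mY pS DX DY pb by simp
        finally show "cmp C (cmp C mL a) (al b) = cmp C (cmp C mY pS) (al b)" .
      qed
    qed
    obtain w where w: "w \<in> arr C" "cdom C w = ccod C lP" "ccod C w = ccod C mL"
        "cmp C w lP = mL" "cmp C w qP = mY"
    proof -
      have c1: "cdom C mL = ccod C a" "cdom C mY = ccod C pS" "ccod C mL = ccod C mY" using mL mY a pS by simp_all
      show ?thesis using pushout_UP[OF poP mL(1) mY(1) c1 comp] that by blast
    qed
    have wom: "cmp C w (om b) = mu b" if b: "b \<in> S" for b
    proof (rule pushout_uniq[OF poW[rule_format, OF b]])
      have o: "om b \<in> arr C" "cdom C (om b) = W b" "ccod C (om b) = ccod C lP"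
        "cmp C (om b) (ll b) = lP" "cmp C (om b) (qq b) = cmp C qP (be b)" using om b by blast+
      show "cmp C w (om b) \<in> arr C" "mu b \<in> arr C" "cdom C (cmp C w (om b)) = ccod C (ll b)"
        "cdom C (mu b) = ccod C (ll b)" "ccod C (cmp C w (om b)) = ccod C (mu b)"
        using o w mu b Wb mL by simp_all
      show "cmp C (cmp C w (om b)) (ll b) = cmp C (mu b) (ll b)"
        using assoc_r[of "ll b" "om b" w] o w Wb b mLb by simp
      show "cmp C (cmp C w (om b)) (qq b) = cmp C (mu b) (qq b)"
        using assoc_r[of "qq b" "om b" w] assoc[of "be b" qP w] o w Wb b mY DY lPd DP
        by (simp add: nu_def)
    qed
    show ?thesis
    proof (rule ex1I[of _ w])
      show "w \<in> hom C (ccod C lP) Q \<and> (\<forall>b\<in>S. cmp C w (om b) = mu b)"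
        using w mL wom unfolding hom_iff by simp
      fix w' assume w': "w' \<in> hom C (ccod C lP) Q \<and> (\<forall>b\<in>S. cmp C w' (om b) = mu b)"
      have w'a: "w' \<in> arr C" "cdom C w' = ccod C lP" "ccod C w' = Q" using w' unfolding hom_iff by blast+
      have os: "om s \<in> arr C" "cdom C (om s) = W s" "ccod C (om s) = ccod C lP"
        "cmp C (om s) (ll s) = lP" using om sS by blast+
      have e1: "cmp C w' lP = mL"
        using assoc[of "ll s" "om s" w'] os w'a Wb[OF sS] w' sS mLb[OF sS] by simp
      have e2: "cmp C w' qP = mY"
      proof (rule chain_uniq[OF clY TY'])
        show "cmp C w' qP \<in> arr C" "cdom C (cmp C w' qP) = YS" "ccod C (cmp C w' qP) = ccod C mY"
          using w'a DP lPd mY by simp_all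
        show "mY \<in> arr C" "cdom C mY = YS" using mY by simp_all
        show "\<forall>b\<in>S. cmp C (cmp C w' qP) (be b) = cmp C mY (be b)"
        proof
          fix b assume b: "b \<in> S"
          have o: "om b \<in> arr C" "cdom C (om b) = W b" "ccod C (om b) = ccod C lP"
            "cmp C (om b) (qq b) = cmp C qP (be b)" using om b by blast+
          have "cmp C (cmp C w' qP) (be b) = cmp C (cmp C w' (om b)) (qq b)"
            using assoc_r[of "be b" qP w'] assoc[of "qq b" "om b" w'] o w'a DY b lPd DP Wb by simp
          then show "cmp C (cmp C w' qP) (be b) = cmp C mY (be b)"
            using w' b mY by (simp add: nu_def)
        qed
      qed
      show "w' = w"
        by (rule pushout_uniq[OF poP]) (use w'a w e1 e2 mL in simp_all)
    qed
  qed
  show ?thesis unfolding chain_colimit_def using PO omh omc up by blast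
qed

end

context catC begin

lemma paste:
  assumes poX: "is_pushout C g u T1 g'"
    and poY: "is_pushout C (cmp C k g) (cmp C pb u) v z"
    and pc: "cmp C pc T1 = cmp C v pb" "cmp C pc g' = cmp C z k"
    and poWb: "is_pushout C pb (cmp C lamc T1) lb qb"
    and poWc: "is_pushout C pc lamc lc qc"
    and tw: "cmp C tw lb = lc" "cmp C tw qb = cmp C qc v"
    and H: "g \<in> hom C A B" "u \<in> hom C A Xb" "T1 \<in> hom C Xb Xc" "g' \<in> hom C B Xc" "k \<in> hom C B Cc"
      "v \<in> hom C Yb Yc" "z \<in> hom C Cc Yc" "pb \<in> hom C Xb Yb" "pc \<in> hom C Xc Yc"
      "lamc \<in> hom C Xc Lo" "lb \<in> hom C Lo Wb" "qb \<in> hom C Yb Wb" "lc \<in> hom C Lo Wc"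
      "qc \<in> hom C Yc Wc" "tw \<in> hom C Wb Wc"
  shows "is_pushout C k (cmp C lb (cmp C lamc g')) tw (cmp C qc z)"
proof -
  note DX = pushoutD(9)[OF poX] and DY = pushoutD(9)[OF poY] and Db = pushoutD(9)[OF poWb]
    and Dc = pushoutD(9)[OF poWc]
  note h = H[unfolded hom_iff]
  have hh: "g \<in> arr C" "cdom C g = A" "ccod C g = B" "u \<in> arr C" "cdom C u = A" "ccod C u = Xb"
    "T1 \<in> arr C" "cdom C T1 = Xb" "ccod C T1 = Xc" "g' \<in> arr C" "cdom C g' = B" "ccod C g' = Xc"
    "k \<in> arr C" "cdom C k = B" "ccod C k = Cc" "v \<in> arr C" "cdom C v = Yb" "ccod C v = Yc"
    "z \<in> arr C" "cdom C z = Cc" "ccod C z = Yc" "pb \<in> arr C" "cdom C pb = Xb" "ccod C pb = Yb"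
    "pc \<in> arr C" "cdom C pc = Xc" "ccod C pc = Yc" "lamc \<in> arr C" "cdom C lamc = Xc" "ccod C lamc = Lo"
    "lb \<in> arr C" "cdom C lb = Lo" "ccod C lb = Wb" "qb \<in> arr C" "cdom C qb = Yb" "ccod C qb = Wb"
    "lc \<in> arr C" "cdom C lc = Lo" "ccod C lc = Wc" "qc \<in> arr C" "cdom C qc = Yc" "ccod C qc = Wc"
    "tw \<in> arr C" "cdom C tw = Wb" "ccod C tw = Wc"
    using h by auto
  let ?g2 = "cmp C lb (cmp C lamc g')"
  have g2: "?g2 \<in> arr C" "cdom C ?g2 = ccod C g" "ccod C ?g2 = ccod C lb"
    using DX Db hh by simp_all
  have qz: "cmp C qc z \<in> arr C" "cdom C (cmp C qc z) = ccod C k" "ccod C (cmp C qc z) = ccod C lc"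
    using Dc DY hh by simp_all
  have sq: "cmp C tw ?g2 = cmp C (cmp C qc z) k"
  proof -
    have "cmp C tw ?g2 = cmp C (cmp C tw lb) (cmp C lamc g')"
      using assoc[of "cmp C lamc g'" lb tw] DX Db hh by simp
    also have "\<dots> = cmp C (cmp C lc lamc) g'" using tw(1) assoc[of g' lamc lc] DX Dc hh by simp
    also have "\<dots> = cmp C qc (cmp C pc g')" using Dc assoc_r[of g' pc qc] DX Dc hh by simp
    also have "\<dots> = cmp C (cmp C qc z) k" using pc(2) assoc[of k z qc] DY Dc hh by simp
    finally show ?thesis .
  qed
  have up: "\<exists>!w. w \<in> hom C (ccod C tw) (ccod C U) \<and> cmp C w tw = U \<and> cmp C w (cmp C qc z) = V"
    if UV: "U \<in> arr C" "V \<in> arr C" "cdom C U = ccod C ?g2" "cdom C V = ccod C k"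
      "ccod C U = ccod C V" "cmp C U ?g2 = cmp C V k" for U V
  proof -
    have U: "cdom C U = ccod C lb" using UV g2 hh by simp
    have e1: "cmp C (cmp C U qb) (cmp C pb u) = cmp C V (cmp C k g)"
    proof -
      have "cmp C (cmp C U qb) (cmp C pb u) = cmp C U (cmp C (cmp C qb pb) u)"
        using assoc_r[of "cmp C pb u" qb U] assoc[of u pb qb] UV U DX Db hh by simp
      also have "\<dots> = cmp C U (cmp C (cmp C lb (cmp C lamc T1)) u)" using Db hh by simp
      also have "\<dots> = cmp C U (cmp C lb (cmp C lamc (cmp C T1 u)))"
        using assoc_r[of u "cmp C lamc T1" lb] assoc_r[of u T1 lamc] DX Db hh by simp
      also have "\<dots> = cmp C U (cmp C lb (cmp C lamc (cmp C g' g)))" using DX hh by simp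
      also have "\<dots> = cmp C (cmp C U ?g2) g"
        using assoc[of g g' lamc] assoc[of g "cmp C lamc g'" lb] assoc[of g ?g2 U] UV U DX Db g2 hh
        by simp
      also have "\<dots> = cmp C V (cmp C k g)" using UV(6) assoc_r[of g k V] UV DX hh by simp
      finally show ?thesis .
    qed
    obtain yQ where yQ: "yQ \<in> arr C" "cdom C yQ = ccod C v" "ccod C yQ = ccod C (cmp C U qb)"
      "cmp C yQ v = cmp C U qb" "cmp C yQ z = V"
    proof -
      have c: "cmp C U qb \<in> arr C" "cdom C (cmp C U qb) = ccod C (cmp C pb u)" "cdom C V = ccod C (cmp C k g)"
        "ccod C (cmp C U qb) = ccod C V"
        using UV U Db DX hh by simp_all
      show ?thesis using pushout_UP[OF poY c(1) UV(2) c(2,3,4) e1] that by blast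
    qed
    have yQc: "ccod C yQ = ccod C U" using yQ UV U Db hh by simp
    have xc: "cmp C (cmp C U lb) lamc = cmp C yQ pc"
    proof (rule pushout_uniq[OF poX])
      show "cmp C (cmp C U lb) lamc \<in> arr C" "cdom C (cmp C (cmp C U lb) lamc) = ccod C T1"
        "cmp C yQ pc \<in> arr C" "cdom C (cmp C yQ pc) = ccod C T1"
        "ccod C (cmp C (cmp C U lb) lamc) = ccod C (cmp C yQ pc)"
        using UV U Db yQ yQc hh by simp_all
      have "cmp C (cmp C (cmp C U lb) lamc) T1 = cmp C U (cmp C lb (cmp C lamc T1))"
        using assoc_r[of T1 lamc "cmp C U lb"] assoc_r[of "cmp C lamc T1" lb U] UV U Db DX hh by simp
      also have "\<dots> = cmp C (cmp C U qb) pb" using Db assoc[of pb qb U] UV U Db hh by simp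
      also have "\<dots> = cmp C (cmp C yQ pc) T1"
        using yQ(4)[symmetric] assoc_r[of T1 pc yQ] pc(1) assoc[of pb v yQ] yQ DY DX hh by simp
      finally show "cmp C (cmp C (cmp C U lb) lamc) T1 = cmp C (cmp C yQ pc) T1" .
      have "cmp C (cmp C (cmp C U lb) lamc) g' = cmp C U ?g2"
        using assoc_r[of g' lamc "cmp C U lb"] assoc_r[of "cmp C lamc g'" lb U] UV U Db DX hh by simp
      also have "\<dots> = cmp C (cmp C yQ pc) g'"
        using UV(6) yQ(5) assoc_r[of g' pc yQ] pc(2) assoc[of k z yQ] yQ DX DY hh by simp
      finally show "cmp C (cmp C (cmp C U lb) lamc) g' = cmp C (cmp C yQ pc) g'" .
    qed
    obtain w where w: "w \<in> arr C" "cdom C w = ccod C lc" "ccod C w = ccod C (cmp C U lb)"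
      "cmp C w lc = cmp C U lb" "cmp C w qc = yQ"
    proof -
      have c: "cmp C U lb \<in> arr C" "cdom C (cmp C U lb) = ccod C lamc" "cdom C yQ = ccod C pc"
        "ccod C (cmp C U lb) = ccod C yQ"
        using UV U Db yQ yQc hh by simp_all
      show ?thesis using pushout_UP[OF poWc c(1) yQ(1) c(2,3,4) xc] that by blast
    qed
    have wc: "ccod C w = ccod C U" using w UV U Db hh by simp
    show ?thesis
    proof (rule ex1I[of _ w])
      have wt: "cmp C w tw = U"
      proof (rule pushout_uniq[OF poWb])
        show "cmp C w tw \<in> arr C" "U \<in> arr C" "cdom C (cmp C w tw) = ccod C lb" "cdom C U = ccod C lb"
          "ccod C (cmp C w tw) = ccod C U" using w UV U wc hh by simp_all
        show "cmp C (cmp C w tw) lb = cmp C U lb"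
          using assoc_r[of lb tw w] w Db hh tw by simp
        show "cmp C (cmp C w tw) qb = cmp C U qb"
          using assoc_r[of qb tw w] assoc[of v qc w] w Db yQ Dc DY hh tw by simp
      qed
      have wz: "cmp C w (cmp C qc z) = V"
        using assoc[of z qc w] w Dc DY yQ hh by simp
      show "w \<in> hom C (ccod C tw) (ccod C U) \<and> cmp C w tw = U \<and> cmp C w (cmp C qc z) = V"
        using w wc wt wz hh unfolding hom_iff by simp
      fix w' assume w': "w' \<in> hom C (ccod C tw) (ccod C U) \<and> cmp C w' tw = U \<and> cmp C w' (cmp C qc z) = V"
      have w'a: "w' \<in> arr C" "cdom C w' = ccod C lc" "ccod C w' = ccod C U" "cmp C w' tw = U"
        "cmp C w' (cmp C qc z) = V"
        using w' hh unfolding hom_iff by simp_all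
      have e2: "cmp C w' qc = yQ"
      proof (rule pushout_uniq[OF poY])
        show "cmp C w' qc \<in> arr C" "yQ \<in> arr C" "cdom C (cmp C w' qc) = ccod C v" "cdom C yQ = ccod C v"
          "ccod C (cmp C w' qc) = ccod C yQ" using w'a Dc yQ yQc hh by simp_all
        show "cmp C (cmp C w' qc) v = cmp C yQ v"
          using assoc_r[of v qc w'] tw(2)[symmetric] assoc[of qb tw w'] w'a Dc DY Db yQ hh by simp
        show "cmp C (cmp C w' qc) z = cmp C yQ z"
          using assoc_r[of z qc w'] w'a Dc DY yQ hh by simp
      qed
      show "w' = w"
      proof (rule pushout_uniq[OF poWc])
        show "w' \<in> arr C" "w \<in> arr C" "cdom C w' = ccod C lc" "cdom C w = ccod C lc" "ccod C w' = ccod C w"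
          using w'a w wc hh by simp_all
        show "cmp C w' lc = cmp C w lc"
          using tw(1)[symmetric] assoc[of lb tw w'] w'a Db w hh by simp
        show "cmp C w' qc = cmp C w qc" using e2 w hh by simp
      qed
    qed
  qed
  show ?thesis unfolding is_pushout_def hom_iff
  proof (intro conjI allI impI)
    show "k \<in> arr C" "?g2 \<in> arr C" "cdom C k = cdom C ?g2" using g2 hh by simp_all
    show "tw \<in> arr C" "cdom C tw = ccod C ?g2" "ccod C tw = ccod C tw" using g2 hh by simp_all
    show "cmp C qc z \<in> arr C" "cdom C (cmp C qc z) = ccod C k" "ccod C (cmp C qc z) = ccod C tw"
      using qz hh by simp_all
    show "cmp C tw ?g2 = cmp C (cmp C qc z) k" by (rule sq)
  next
    fix U V
    assume "U \<in> arr C \<and> V \<in> arr C \<and> cdom C U = ccod C ?g2 \<and> cdom C V = ccod C k \<and>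
       ccod C U = ccod C V \<and> cmp C U ?g2 = cmp C V k"
    then show "\<exists>!w. (w \<in> arr C \<and> cdom C w = ccod C tw \<and> ccod C w = ccod C U) \<and>
               cmp C w tw = U \<and> cmp C w (cmp C qc z) = V"
      using up[of U V] hh unfolding hom_iff by blast
  qed
qed

end

lemma chain_colimit_cong_lam:
  assumes "\<forall>a\<in>S. lam a = lam' a"
  shows "chain_colimit C r S X T L lam = chain_colimit C r S X T L lam'"
  unfolding chain_colimit_def using assms by (simp cong: ball_cong)

context seqsetup begin

lemma b0_not_lim: "limit_point r c \<Longrightarrow> c \<noteq> b0"
  unfolding limit_point_def using b0_least by blast

lemma lim_props: "limit_point r c \<Longrightarrow> c \<in> Field r \<and> c \<noteq> b0 \<and> \<not> (\<exists>b. immediate_succ r b c)"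
  using b0_not_lim unfolding limit_point_def by blast

lemma Ylim: "limit_point r c \<Longrightarrow> chain_colimit C r (underS r c) Y TY (Y c) (\<lambda>b. TY b c)"
proof -
  assume lp: "limit_point r c"
  note c = lim_props[OF lp]
  have IH: "\<forall>a\<in>underS r c. inv a" using inv_all FieldL by (auto simp: underS_iff)
  have cl: "chain_colimit C r (underS r c) Y TY (fst (Lm c)) (snd (Lm c))"
    using lim_facts(1)[of c] c IH by blast
  have "\<forall>a\<in>underS r c. snd (Lm c) a = TY a c" using Y_lim(2)[of c] c by (auto simp: underS_iff)
  then have "chain_colimit C r (underS r c) Y TY (fst (Lm c)) (snd (Lm c)) =
      chain_colimit C r (underS r c) Y TY (fst (Lm c)) (\<lambda>b. TY b c)"
    by (rule chain_colimit_cong_lam)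
  then show ?thesis using cl Y_lim(1)[of c] c by simp
qed

lemma Y_tseq: "tseq C (base_changes C I) r Y TY"
  unfolding tseq_def
proof (intro conjI allI impI ballI)
  fix b assume "b \<in> Field r"
  then have "inv b" by (rule inv_all)
  then show "Y b \<in> obj C" "TY b b = idt C (Y b)" unfolding inv_def by blast+
next
  fix b c assume bc: "(b, c) \<in> r"
  then have "inv c" using inv_all FieldR by blast
  then show "TY b c \<in> hom C (Y b) (Y c)" unfolding inv_def hom_iff using bc by blast
next
  fix b c d assume "(b, c) \<in> r \<and> (c, d) \<in> r"
  moreover then have "inv d" using inv_all FieldR by blast
  ultimately show "cmp C (TY c d) (TY b c) = TY b d" unfolding inv_def by blast
next
  fix b c assume imm: "immediate_succ r b c"
  have bc: "(b, c) \<in> r" "b \<noteq> c" using imm unfolding immediate_succ_def by blast+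
  have "inv b" using inv_all FieldL bc by blast
  then have pb: "p b \<in> arr C" "cdom C (p b) = X b" "ccod C (p b) = Y b" unfolding inv_def by blast+
  have po: "is_pushout C (kg c) (cmp C (p b) (uu c)) (vv c) (zz c)" using succ_facts(1)[OF imm pb] .
  have "kg c \<in> I" unfolding kg_def using sel_props(6)[OF imm] .
  moreover have "TY b c = vv c"
    using Y_succ(2)[OF imm, of b] bc \<open>inv b\<close> succ_facts(2,3)[OF imm pb] unfolding inv_def by simp
  ultimately show "TY b c \<in> base_changes C I" unfolding base_changes_def using po by auto
next
  fix c assume "limit_point r c"
  then show "chain_colimit C r (underS r c) Y TY (Y c) (\<lambda>b. TY b c)" by (rule Ylim)
qed

definition YL where "YL = (SOME x. chain_colimit C r (Field r) Y TY (fst x) (snd x))"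

lemma YL: "chain_colimit C r (Field r) Y TY (fst YL) (snd YL)"
proof -
  have "\<exists>L' lam'. chain_colimit C r (Field r) Y TY L' lam'"
  proof (rule chain_colimit_exists[OF cc e2])
    show "\<forall>b\<in>Field r. (b, b) \<in> r" using refl by blast
    show "Relation.trans r" by (rule trans_r)
    show "\<forall>b\<in>Field r. Y b \<in> obj C" using Y_tseq unfolding tseq_def by blast
    show "\<forall>b\<in>Field r. \<forall>c\<in>Field r. (b, c) \<in> r \<longrightarrow> TY b c \<in> hom C (Y b) (Y c)"
      using Y_tseq unfolding tseq_def by blast
    show "\<forall>b\<in>Field r. TY b b = idt C (Y b)" using Y_tseq unfolding tseq_def by blast
    show "\<forall>b\<in>Field r. \<forall>c\<in>Field r. \<forall>d\<in>Field r. (b, c) \<in> r \<and> (c, d) \<in> r \<longrightarrow> cmp C (TY c d) (TY b c) = TY b d"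
      using Y_tseq unfolding tseq_def by blast
  qed
  then have "\<exists>x. chain_colimit C r (Field r) Y TY (fst x) (snd x)" by auto
  then show ?thesis unfolding YL_def by (rule someI_ex)
qed

definition h where "h = (THE w. w \<in> hom C L (fst YL) \<and> (\<forall>b\<in>Field r. cmp C w (lam b) = cmp C (snd YL b) (p b)))"

lemma h_props: "h \<in> arr C" "cdom C h = L" "ccod C h = fst YL" "\<forall>b\<in>Field r. cmp C h (lam b) = cmp C (snd YL b) (p b)"
proof -
  note DY = chainD[OF YL] and DX = chainD[OF colX]
  define mu where "mu b = cmp C (snd YL b) (p b)" for b
  have ib: "b \<in> Field r \<Longrightarrow> p b \<in> arr C \<and> cdom C (p b) = X b \<and> ccod C (p b) = Y b" for b
    using inv_all unfolding inv_def by blast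
  have m1: "\<forall>b\<in>Field r. mu b \<in> hom C (X b) (fst YL)" unfolding mu_def hom_iff using ib DY by simp
  have m2: "\<forall>b\<in>Field r. \<forall>c\<in>Field r. (b, c) \<in> r \<longrightarrow> cmp C (mu c) (T b c) = mu b"
  proof (intro ballI impI)
    fix b c assume bc: "b \<in> Field r" "c \<in> Field r" "(b, c) \<in> r"
    have ic: "inv c" using inv_all bc by blast
    have t: "TY b c \<in> arr C" "cdom C (TY b c) = Y b" "ccod C (TY b c) = Y c"
      "cmp C (p c) (T b c) = cmp C (TY b c) (p b)" using ic bc unfolding inv_def by blast+
    note Tb = T_hom[OF bc(3)]
    have "cmp C (mu c) (T b c) = cmp C (snd YL c) (cmp C (TY b c) (p b))"
      unfolding mu_def using assoc_r[of "T b c" "p c" "snd YL c"] Tb ib[OF bc(2)] DY bc t by simp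
    also have "\<dots> = mu b" unfolding mu_def
      using assoc[of "p b" "TY b c" "snd YL c"] t ib[OF bc(1)] DY bc by simp
    finally show "cmp C (mu c) (T b c) = mu b" .
  qed
  obtain w where w: "w \<in> arr C" "cdom C w = L" "ccod C w = fst YL" "\<forall>b\<in>Field r. cmp C w (lam b) = mu b"
    using chain_UP[OF colX DY(1) m1 m2] by blast
  have Th: "\<forall>b\<in>Field r. \<forall>c\<in>Field r. (b, c) \<in> r \<longrightarrow> T b c \<in> arr C \<and> ccod C (T b c) = X c"
    using T_hom by blast
  have "h = w" unfolding h_def mu_def[symmetric]
  proof (rule the_equality)
    show "w \<in> hom C L (fst YL) \<and> (\<forall>b\<in>Field r. cmp C w (lam b) = mu b)" using w unfolding hom_iff by simp
    fix w' assume w': "w' \<in> hom C L (fst YL) \<and> (\<forall>b\<in>Field r. cmp C w' (lam b) = mu b)"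
    show "w' = w" by (rule chain_uniq[OF colX Th]) (use w w' in \<open>simp_all add: hom_iff\<close>)
  qed
  then show "h \<in> arr C" "cdom C h = L" "ccod C h = fst YL" "\<forall>b\<in>Field r. cmp C h (lam b) = cmp C (snd YL b) (p b)"
    using w unfolding mu_def by simp_all
qed

lemma hf_cof: "cmp C h (lam b0) \<in> cof_reg TYPE('i) C I"
proof -
  have "cmp C h (lam b0) = cmp C (snd YL b0) (p b0)" using h_props(4) b0F by blast
  also have "\<dots> = snd YL b0" using Y_b0(3) chainD(2,3)[OF YL b0F] Y_b0(1) by simp
  finally have e: "cmp C h (lam b0) = snd YL b0" .
  show ?thesis unfolding cof_reg_def tcomp_def e mem_Collect_eq
    by (intro exI[of _ r] exI[of _ Y] exI[of _ TY] exI[of _ "fst YL"] exI[of _ "snd YL"] exI[of _ b0])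
      (use wo b0F b0min Y_tseq YL in simp)
qed

end

context seqsetup begin

lemma Lobj: "L \<in> obj C" using chainD(1)[OF colX] .
lemma lamF: "b \<in> Field r \<Longrightarrow> lam b \<in> arr C \<and> cdom C (lam b) = X b \<and> ccod C (lam b) = L"
  using chainD(2,3,4)[OF colX] by blast
lemma lam_T: "(b, c) \<in> r \<Longrightarrow> cmp C (lam c) (T b c) = lam b"
  using chainD(5)[OF colX] FieldL FieldR by blast
lemma pF: "b \<in> Field r \<Longrightarrow> p b \<in> arr C \<and> cdom C (p b) = X b \<and> ccod C (p b) = Y b"
  using inv_all unfolding inv_def by blast
lemma TYF: "(b, c) \<in> r \<Longrightarrow> TY b c \<in> arr C \<and> cdom C (TY b c) = Y b \<and> ccod C (TY b c) = Y c \<and>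
    cmp C (p c) (T b c) = cmp C (TY b c) (p b)"
  using inv_all[of c] FieldR unfolding inv_def by blast
lemma TYid: "b \<in> Field r \<Longrightarrow> TY b b = idt C (Y b)"
  using inv_all unfolding inv_def by blast
lemma TYcomp: "(b, c) \<in> r \<Longrightarrow> (c, d) \<in> r \<Longrightarrow> cmp C (TY c d) (TY b c) = TY b d"
  using inv_all[of d] FieldR unfolding inv_def by blast

definition Wpo where "Wpo b = (if b = b0 then (idt C L, lam b0) else (SOME x. is_pushout C (p b) (lam b) (fst x) (snd x)))"
definition ll where "ll b = fst (Wpo b)"
definition qq where "qq b = snd (Wpo b)"
definition W where "W b = ccod C (ll b)"

lemma W_po: "b \<in> Field r \<Longrightarrow> is_pushout C (p b) (lam b) (ll b) (qq b)"
proof (cases "b = b0")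
  case True
  have l: "lam b0 \<in> arr C" "cdom C (lam b0) = X b0" "ccod C (lam b0) = L" using lamF b0F by blast+
  show ?thesis using pushout_id[OF l(1)] True l Y_b0(3) unfolding ll_def qq_def Wpo_def by simp
next
  case False
  assume b: "b \<in> Field r"
  have "\<exists>f' g'. is_pushout C (p b) (lam b) f' g'"
    using pushout_exists[OF cc inf] pF[OF b] lamF[OF b] by simp
  then have "\<exists>x. is_pushout C (p b) (lam b) (fst x) (snd x)" by auto
  then have "is_pushout C (p b) (lam b) (fst (SOME x. is_pushout C (p b) (lam b) (fst x) (snd x))) (snd (SOME x. is_pushout C (p b) (lam b) (fst x) (snd x)))"
    by (rule someI_ex)
  then show ?thesis using False unfolding ll_def qq_def Wpo_def by simp
qed

lemma WF: "b \<in> Field r \<Longrightarrow> ll b \<in> arr C \<and> cdom C (ll b) = L \<and> ccod C (ll b) = W b \<and>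
   qq b \<in> arr C \<and> cdom C (qq b) = Y b \<and> ccod C (qq b) = W b \<and> W b \<in> obj C \<and>
   cmp C (ll b) (lam b) = cmp C (qq b) (p b)"
  using pushoutD[OF W_po] lamF pF cod_obj unfolding W_def by metis

lemma W_b0: "W b0 = L" "ll b0 = idt C L"
  unfolding W_def ll_def Wpo_def using Lobj by simp_all

definition TW where "TW b c = (THE w. w \<in> hom C (W b) (W c) \<and> cmp C w (ll b) = ll c \<and> cmp C w (qq b) = cmp C (qq c) (TY b c))"

lemma TW_uniq:
  assumes bc: "(b, c) \<in> r"
    and w1: "w1 \<in> arr C" "cdom C w1 = W b" "ccod C w1 = W c" "cmp C w1 (ll b) = ll c" "cmp C w1 (qq b) = cmp C (qq c) (TY b c)"
    and w2: "w2 \<in> arr C" "cdom C w2 = W b" "ccod C w2 = W c" "cmp C w2 (ll b) = ll c" "cmp C w2 (qq b) = cmp C (qq c) (TY b c)"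
  shows "w1 = w2"
  by (rule pushout_uniq[OF W_po[OF FieldL[OF bc]]]) (use w1 w2 WF[OF FieldL[OF bc]] in simp_all)

lemma TW_props:
  assumes bc: "(b, c) \<in> r"
  shows "TW b c \<in> arr C" "cdom C (TW b c) = W b" "ccod C (TW b c) = W c" "cmp C (TW b c) (ll b) = ll c"
    "cmp C (TW b c) (qq b) = cmp C (qq c) (TY b c)"
proof -
  have b: "b \<in> Field r" and c: "c \<in> Field r" using bc FieldL FieldR by blast+
  note Wb = WF[OF b] and Wc = WF[OF c] and t = TYF[OF bc] and Tb = T_hom[OF bc]
  have e: "cmp C (ll c) (lam b) = cmp C (cmp C (qq c) (TY b c)) (p b)"
  proof -
    have "cmp C (ll c) (lam b) = cmp C (ll c) (cmp C (lam c) (T b c))" using lam_T[OF bc] by simp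
    also have "\<dots> = cmp C (qq c) (cmp C (p c) (T b c))"
      using assoc[of "T b c" "lam c" "ll c"] assoc_r[of "T b c" "p c" "qq c"] Tb lamF[OF c] Wc pF[OF c] by simp
    also have "\<dots> = cmp C (cmp C (qq c) (TY b c)) (p b)"
      using t assoc[of "p b" "TY b c" "qq c"] pF[OF b] Wc by simp
    finally show ?thesis .
  qed
  obtain w where w: "w \<in> arr C" "cdom C w = ccod C (ll b)" "ccod C w = ccod C (ll c)"
    "cmp C w (ll b) = ll c" "cmp C w (qq b) = cmp C (qq c) (TY b c)"
  proof -
    have cnd: "ll c \<in> arr C" "cmp C (qq c) (TY b c) \<in> arr C" "cdom C (ll c) = ccod C (lam b)"
      "cdom C (cmp C (qq c) (TY b c)) = ccod C (p b)" "ccod C (ll c) = ccod C (cmp C (qq c) (TY b c))"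
      using Wc t lamF[OF b] pF[OF b] by simp_all
    show ?thesis using pushout_UP[OF W_po[OF b] cnd e] that by blast
  qed
  have "TW b c = w" unfolding TW_def
  proof (rule the_equality)
    show "w \<in> hom C (W b) (W c) \<and> cmp C w (ll b) = ll c \<and> cmp C w (qq b) = cmp C (qq c) (TY b c)"
      using w Wb Wc unfolding hom_iff by simp
    fix w' assume "w' \<in> hom C (W b) (W c) \<and> cmp C w' (ll b) = ll c \<and> cmp C w' (qq b) = cmp C (qq c) (TY b c)"
    then show "w' = w" using TW_uniq[OF bc, of w' w] w Wb Wc unfolding hom_iff by simp
  qed
  then show "TW b c \<in> arr C" "cdom C (TW b c) = W b" "ccod C (TW b c) = W c" "cmp C (TW b c) (ll b) = ll c"
    "cmp C (TW b c) (qq b) = cmp C (qq c) (TY b c)" using w Wb Wc by simp_all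
qed

end

context seqsetup begin

lemma TW_id: "b \<in> Field r \<Longrightarrow> TW b b = idt C (W b)"
proof -
  assume b: "b \<in> Field r"
  note Wb = WF[OF b] and bb = refl[OF b]
  show ?thesis
    by (rule TW_uniq[OF bb]) (use TW_props[OF bb] Wb TYid[OF b] in simp_all)
qed

lemma TW_comp: "(b, c) \<in> r \<Longrightarrow> (c, d) \<in> r \<Longrightarrow> cmp C (TW c d) (TW b c) = TW b d"
proof -
  assume bc: "(b, c) \<in> r" and cd: "(c, d) \<in> r"
  have bd: "(b, d) \<in> r" using trans bc cd by blast
  have b: "b \<in> Field r" and c: "c \<in> Field r" and d: "d \<in> Field r" using bc cd FieldL FieldR by blast+
  note t1 = TW_props[OF bc] and t2 = TW_props[OF cd] and Wb = WF[OF b] and Wc = WF[OF c] and Wd = WF[OF d]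
  note y1 = TYF[OF bc] and y2 = TYF[OF cd]
  show ?thesis
  proof (rule TW_uniq[OF bd])
    show "cmp C (TW c d) (TW b c) \<in> arr C" "cdom C (cmp C (TW c d) (TW b c)) = W b"
      "ccod C (cmp C (TW c d) (TW b c)) = W d" using t1 t2 by simp_all
    show "cmp C (cmp C (TW c d) (TW b c)) (ll b) = ll d"
      using assoc_r[of "ll b" "TW b c" "TW c d"] t1 t2 Wb by simp
    have "cmp C (cmp C (TW c d) (TW b c)) (qq b) = cmp C (cmp C (TW c d) (qq c)) (TY b c)"
      using assoc_r[of "qq b" "TW b c" "TW c d"] assoc[of "TY b c" "qq c" "TW c d"] t1 t2 Wb Wc y1 by simp
    also have "\<dots> = cmp C (qq d) (TY b d)"
      using t2 assoc_r[of "TY b c" "TY c d" "qq d"] y1 y2 Wd TYcomp[OF bc cd] by simp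
    finally show "cmp C (cmp C (TW c d) (TW b c)) (qq b) = cmp C (qq d) (TY b d)" .
  qed (use TW_props[OF bd] in simp_all)
qed

lemma TW_succ: "immediate_succ r b c \<Longrightarrow> TW b c \<in> base_changes C I"
proof -
  assume imm: "immediate_succ r b c"
  have bc: "(b, c) \<in> r" "b \<noteq> c" using imm unfolding immediate_succ_def by blast+
  have b: "b \<in> Field r" and c: "c \<in> Field r" using bc FieldL FieldR by blast+
  note pb = pF[OF b] and pc = pF[OF c]
  note S = sel_props[OF imm] and DX = pushoutD[OF sel_props(2)[OF imm]]
  note F = succ_facts[OF imm pb[THEN conjunct1] pb[THEN conjunct2, THEN conjunct1] pb[THEN conjunct2, THEN conjunct2]]
  note t = TW_props[OF bc(1)] and Wb = WF[OF b] and Wc = WF[OF c] and Tb = T_hom[OF bc(1)]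
  have TYv: "TY b c = vv c"
    using Y_succ(2)[OF imm, of b] bc TYid[OF b] F(2,3) by simp
  have Yc: "Y c = ccod C (vv c)" using Y_succ(1)[OF imm] .
  have po: "is_pushout C (kk c) (cmp C (ll b) (cmp C (lam c) (gg' c))) (TW b c) (cmp C (qq c) (zz c))"
  proof (rule paste[OF S(2) _ F(10,11) _ W_po[OF c] t(4)])
    show "is_pushout C (cmp C (kk c) (gg c)) (cmp C (p b) (uu c)) (vv c) (zz c)" using F(1) unfolding kg_def .
    show "is_pushout C (p b) (cmp C (lam c) (T b c)) (ll b) (qq b)" using W_po[OF b] lam_T[OF bc(1)] by simp
    show "cmp C (TW b c) (qq b) = cmp C (qq c) (vv c)" using t(5) TYv by simp
    show "gg c \<in> hom C (cdom C (gg c)) (ccod C (gg c))" "uu c \<in> hom C (cdom C (gg c)) (X b)"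
      "T b c \<in> hom C (X b) (X c)" "gg' c \<in> hom C (ccod C (gg c)) (X c)"
      "kk c \<in> hom C (ccod C (gg c)) (ccod C (kk c))" "vv c \<in> hom C (Y b) (Y c)"
      "zz c \<in> hom C (ccod C (kk c)) (Y c)" "p b \<in> hom C (X b) (Y b)" "p c \<in> hom C (X c) (Y c)"
      "lam c \<in> hom C (X c) L" "ll b \<in> hom C L (W b)" "qq b \<in> hom C (Y b) (W b)"
      "ll c \<in> hom C L (W c)" "qq c \<in> hom C (Y c) (W c)" "TW b c \<in> hom C (W b) (W c)"
      unfolding hom_iff using DX Tb S F Yc pb pc lamF[OF c] Wb Wc t by simp_all
  qed
  then show ?thesis unfolding base_changes_def using S(3) by auto
qed

lemma TW_lim: "limit_point r c \<Longrightarrow> chain_colimit C r (underS r c) W TW (W c) (\<lambda>b. TW b c)"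
proof -
  assume lp: "limit_point r c"
  note cp = lim_props[OF lp]
  have c: "c \<in> Field r" using cp by blast
  obtain s where s: "(s, c) \<in> r" "s \<noteq> c" using lp unfolding limit_point_def by blast
  let ?S = "underS r c"
  have sS: "s \<in> ?S" using s by (simp add: underS_iff)
  have SF: "b \<in> ?S \<Longrightarrow> b \<in> Field r" for b using FieldL by (auto simp: underS_iff)
  have Sc: "b \<in> ?S \<Longrightarrow> (b, c) \<in> r" for b by (simp add: underS_iff)
  have "chain_colimit C r ?S W TW (ccod C (ll c)) (\<lambda>b. TW b c)"
  proof (rule comm[OF sS])
    show "\<forall>b\<in>?S. \<forall>c\<in>?S. (b, c) \<in> r \<or> (c, b) \<in> r" using total SF by blast
    show "\<forall>b\<in>?S. \<forall>c\<in>?S. (b, c) \<in> r \<longrightarrow> T b c \<in> arr C \<and> cdom C (T b c) = X b \<and> ccod C (T b c) = X c"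
      using T_hom by blast
    show "\<forall>b\<in>?S. \<forall>c\<in>?S. (b, c) \<in> r \<longrightarrow> TY b c \<in> arr C \<and> cdom C (TY b c) = Y b \<and> ccod C (TY b c) = Y c"
      using TYF by blast
    show "\<forall>b\<in>?S. p b \<in> arr C \<and> cdom C (p b) = X b \<and> ccod C (p b) = Y b" using pF SF by blast
    show "chain_colimit C r ?S X T (X c) (\<lambda>b. T b c)" using Xlim[OF lp] .
    show "chain_colimit C r ?S Y TY (Y c) (\<lambda>b. TY b c)" using Ylim[OF lp] .
    show "p c \<in> arr C" "cdom C (p c) = X c" "ccod C (p c) = Y c" using pF[OF c] by simp_all
    show "\<forall>b\<in>?S. cmp C (p c) (T b c) = cmp C (TY b c) (p b)" using TYF Sc by blast
    show "lam c \<in> arr C" "cdom C (lam c) = X c" "ccod C (lam c) = L" using lamF[OF c] by simp_all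
    show "\<forall>b\<in>?S. is_pushout C (p b) (cmp C (lam c) (T b c)) (ll b) (qq b)"
      using W_po SF lam_T Sc by simp
    show "\<forall>b\<in>?S. W b = ccod C (ll b)" unfolding W_def by simp
    show "\<forall>b\<in>?S. \<forall>c\<in>?S. (b, c) \<in> r \<longrightarrow> TW b c \<in> arr C \<and> cdom C (TW b c) = W b \<and> ccod C (TW b c) = W c \<and>
        cmp C (TW b c) (ll b) = ll c \<and> cmp C (TW b c) (qq b) = cmp C (qq c) (TY b c)"
      using TW_props by blast
    show "is_pushout C (p c) (lam c) (ll c) (qq c)" using W_po[OF c] .
    show "\<forall>b\<in>?S. TW b c \<in> arr C \<and> cdom C (TW b c) = W b \<and> ccod C (TW b c) = ccod C (ll c) \<and>
        cmp C (TW b c) (ll b) = ll c \<and> cmp C (TW b c) (qq b) = cmp C (qq c) (TY b c)"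
      using TW_props Sc unfolding W_def by blast
  qed
  then show ?thesis unfolding W_def .
qed

lemma W_tseq: "tseq C (base_changes C I) r W TW"
  unfolding tseq_def
proof (intro conjI allI impI ballI)
  fix b assume "b \<in> Field r"
  then show "W b \<in> obj C" "TW b b = idt C (W b)" using WF TW_id by blast+
next
  fix b c assume "(b, c) \<in> r"
  then show "TW b c \<in> hom C (W b) (W c)" using TW_props unfolding hom_iff by blast
next
  fix b c d assume "(b, c) \<in> r \<and> (c, d) \<in> r"
  then show "cmp C (TW c d) (TW b c) = TW b d" using TW_comp by blast
next
  fix b c assume "immediate_succ r b c"
  then show "TW b c \<in> base_changes C I" by (rule TW_succ)
next
  fix c assume "limit_point r c"
  then show "chain_colimit C r (underS r c) W TW (W c) (\<lambda>b. TW b c)" by (rule TW_lim)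
qed

end

context seqsetup begin

definition om where "om b = (THE w. w \<in> hom C (W b) (fst YL) \<and> cmp C w (ll b) = h \<and> cmp C w (qq b) = snd YL b)"

lemma om_props:
  assumes b: "b \<in> Field r"
  shows "om b \<in> arr C" "cdom C (om b) = W b" "ccod C (om b) = fst YL" "cmp C (om b) (ll b) = h"
    "cmp C (om b) (qq b) = snd YL b"
proof -
  note Wb = WF[OF b] and DY = chainD[OF YL]
  obtain w where w: "w \<in> arr C" "cdom C w = ccod C (ll b)" "ccod C w = ccod C h"
    "cmp C w (ll b) = h" "cmp C w (qq b) = snd YL b"
  proof -
    have cnd: "h \<in> arr C" "snd YL b \<in> arr C" "cdom C h = ccod C (lam b)" "cdom C (snd YL b) = ccod C (p b)"
      "ccod C h = ccod C (snd YL b)" "cmp C h (lam b) = cmp C (snd YL b) (p b)"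
      using h_props lamF[OF b] pF[OF b] DY b by simp_all
    show ?thesis using pushout_UP[OF W_po[OF b] cnd] that by blast
  qed
  have "om b = w" unfolding om_def
  proof (rule the_equality)
    show "w \<in> hom C (W b) (fst YL) \<and> cmp C w (ll b) = h \<and> cmp C w (qq b) = snd YL b"
      using w Wb h_props unfolding hom_iff by simp
    fix w' assume w': "w' \<in> hom C (W b) (fst YL) \<and> cmp C w' (ll b) = h \<and> cmp C w' (qq b) = snd YL b"
    show "w' = w"
      by (rule pushout_uniq[OF W_po[OF b]]) (use w w' Wb h_props in \<open>simp_all add: hom_iff\<close>)
  qed
  then show "om b \<in> arr C" "cdom C (om b) = W b" "ccod C (om b) = fst YL" "cmp C (om b) (ll b) = h"
    "cmp C (om b) (qq b) = snd YL b" using w Wb h_props by simp_all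
qed

lemma W_colim: "chain_colimit C r (Field r) W TW (fst YL) om"
proof -
  have "chain_colimit C r (Field r) W TW (ccod C h) om"
  proof (rule comm[OF b0F])
    show "\<forall>b\<in>Field r. \<forall>c\<in>Field r. (b, c) \<in> r \<or> (c, b) \<in> r" using total by blast
    show "\<forall>b\<in>Field r. \<forall>c\<in>Field r. (b, c) \<in> r \<longrightarrow> T b c \<in> arr C \<and> cdom C (T b c) = X b \<and> ccod C (T b c) = X c"
      using T_hom by blast
    show "\<forall>b\<in>Field r. \<forall>c\<in>Field r. (b, c) \<in> r \<longrightarrow> TY b c \<in> arr C \<and> cdom C (TY b c) = Y b \<and> ccod C (TY b c) = Y c"
      using TYF by blast
    show "\<forall>b\<in>Field r. p b \<in> arr C \<and> cdom C (p b) = X b \<and> ccod C (p b) = Y b" using pF by blast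
    show "chain_colimit C r (Field r) X T L lam" using colX .
    show "chain_colimit C r (Field r) Y TY (fst YL) (snd YL)" using YL .
    show "h \<in> arr C" "cdom C h = L" "ccod C h = fst YL" "\<forall>b\<in>Field r. cmp C h (lam b) = cmp C (snd YL b) (p b)"
      using h_props by simp_all
    show "idt C L \<in> arr C" "cdom C (idt C L) = L" "ccod C (idt C L) = L" using Lobj by simp_all
    show "\<forall>b\<in>Field r. is_pushout C (p b) (cmp C (idt C L) (lam b)) (ll b) (qq b)"
      using W_po lamF by simp
    show "\<forall>b\<in>Field r. W b = ccod C (ll b)" unfolding W_def by simp
    show "\<forall>b\<in>Field r. \<forall>c\<in>Field r. (b, c) \<in> r \<longrightarrow> TW b c \<in> arr C \<and> cdom C (TW b c) = W b \<and> ccod C (TW b c) = W c \<and>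
        cmp C (TW b c) (ll b) = ll c \<and> cmp C (TW b c) (qq b) = cmp C (qq c) (TY b c)"
      using TW_props by blast
    show "is_pushout C h (idt C L) h (idt C (fst YL))" using pushout_id2[OF h_props(1)] h_props by simp
    show "\<forall>b\<in>Field r. om b \<in> arr C \<and> cdom C (om b) = W b \<and> ccod C (om b) = ccod C h \<and>
        cmp C (om b) (ll b) = h \<and> cmp C (om b) (qq b) = cmp C (idt C (fst YL)) (snd YL b)"
      using om_props h_props chainD(2,4)[OF YL] by simp
  qed
  then show ?thesis using h_props by simp
qed

lemma h_cof: "h \<in> cof_reg TYPE('i) C I"
proof -
  have "om b0 = h" using om_props[OF b0F] W_b0 by simp
  then show ?thesis unfolding cof_reg_def tcomp_def mem_Collect_eq
    by (intro exI[of _ r] exI[of _ W] exI[of _ TW] exI[of _ "fst YL"] exI[of _ om] exI[of _ b0])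
      (use wo b0F b0min W_tseq W_colim in simp)
qed

lemma main: "lam b0 \<in> Phi C (cof_reg TYPE('i) C I)"
  unfolding Phi_def mem_Collect_eq
  using lamF[OF b0F] h_cof h_props hf_cof by blast

end

theorem lemma4p3:
  fixes C :: "('o, 'm) cat" and I :: "'m set"
  assumes "category C"
    and "cocomplete TYPE('x) C"
    and "infinite (UNIV :: 'x set)"
    and "\<exists>e :: 'i \<Rightarrow> 'x. inj e"
    and "I \<subseteq> arr C"
  shows "cof_reg TYPE('i) C (Phi C I) \<subseteq> Phi C (cof_reg TYPE('i) C I)"
proof
  fix f assume "f \<in> cof_reg TYPE('i) C (Phi C I)"
  then obtain r :: "'i rel" and X T L lam b0 where
    d: "Well_order r" "b0 \<in> Field r" "\<forall>b\<in>Field r. (b0, b) \<in> r"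
      "tseq C (base_changes C (Phi C I)) r X T" "chain_colimit C r (Field r) X T L lam" "f = lam b0"
    unfolding cof_reg_def tcomp_def by blast
  obtain e :: "'i \<Rightarrow> 'x" where e: "inj e" using assms(4) by blast
  obtain e2 :: "'i \<times> 'i \<Rightarrow> 'x" where e2: "inj e2" using inj_pair_x[OF assms(3) e] by blast
  interpret S: seqsetup C "TYPE('x)" I r X T L lam b0 e2
    by (unfold_locales) (use assms d e2 in \<open>simp_all add: catC_def\<close>)
  show "f \<in> Phi C (cof_reg TYPE('i) C I)" using S.main d(6) by simp
qed

end
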